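(* In the setting below, let $\nu,\nu'\subseteq\{0,\dots,n\}$ with $|\nu|=|\nu'|=n$ and $\nu\neq\nu'$, and put $$\lambda^{\mathbb{E}}_{\nu\cap\nu'}=\max_{\tau\in D(n-2),\ \mathrm{type}(\tau)=\nu\cap\nu'}\lambda^{\mathbb{E}}_{\tau,\mathrm{bipartite}}.$$ Then $$\max\{\|P^\pi_\nu P^\pi_{\nu'}-P^\pi_{\nu\cap\nu'}\|,\ \|P^\pi_{\nu'}P^\pi_{\nu}-P^\pi_{\nu\cap\nu'}\|\}\le\Big(\sup_{g\in K}\|\pi(g)\|^2\Big)\lambda^{\mathbb{E}}_{\nu\cap\nu'}.$$
   Context: Setting: $X$ is a pure $n$-dimensional partite simplicial complex ($n\ge2$; vertex set partitioned into $V_0,\dots,V_n$, each $n$-simplex having one vertex in each $V_i$; $\mathrm{type}(\tau)=\{i:\tau\cap V_i\neq\emptyset\}$), gallery connected, with all $1$-dimensional links connected finite graphs. $G$ is a locally compact unimodular group with Haar measure $\mu$ acting cocompactly on $X$ by type-preserving simplicial automorphisms, with $G_\tau$ open compact for every $\tau\in X(n-2)\cup X(n-1)\cup X(n)$; $\pi$ is a strongly continuous representation of $G$ on a Banach space $\mathbb{E}$ with norm $|\cdot|$. For $k=n-2,n-1,n$, $D(k)$ is a set of representatives of the $G$-orbits on $X(k)$, chosen so that for $k_1<k_2$ every $\tau\in D(k_1)$ is contained in some $\sigma\in D(k_2)$. $K=\{g\in G:\exists\sigma,\sigma'\in D(n),\ |g.\sigma\cap\sigma'|\ge n-1\}$.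 $C(X(n),\pi)$ is the space of maps $\phi:X(n)\to\mathbb{E}$ with $\phi(g.\sigma)=\pi(g)\phi(\sigma)$, normed by $\|\phi\|^2=\sum_{\sigma\in D(n)}\frac{1}{\mu(G_\sigma)}|\phi(\sigma)|^2$. For $\nu\subseteq\{0,\dots,n\}$ with $|\nu|\in\{n-1,n\}$, write $\sigma\sim_\nu\sigma'$ if there is a simplex $\tau\subseteq\sigma\cap\sigma'$ with $\mathrm{type}(\tau)=\nu$, and $P^\pi_\nu\phi(\sigma)=\frac{1}{|\{\sigma':\sigma'\sim_\nu\sigma\}|}\sum_{\sigma'\sim_\nu\sigma}\phi(\sigma')$. For $\tau\in X(n-2)$, the link $X_\tau$ is the graph with vertices the $v\notin\tau$ with $\tau\cup\{v\}\in X$ and edges the pairs $\{u,v\}$ with $\tau\cup\{u,v\}\in X(n)$, each edge of weight $1$ (so vertex weight $m(v)$ is the degree); it is bipartite with sides the vertices of each of the two colours not in $\mathrm{type}(\tau)$. For a finite bipartite graph with sides $S_1,S_2$ and such weights, $\ell^2(V,m;\mathbb{E})$ is the space of $\phi:V\to\mathbb{E}$ with $\|\phi\|^2=\sum_vm(v)|\phi(v)|^2$, $(A\phi)(v)=\frac1{m(v)}\sum_{u:\{u,v\}\in E}\phi(u)$, $M_{\mathrm{sides}}\phi(u)=\frac1{m(S_i)}\sum_{w\in S_i}m(w)\phi(w)$ for $u\in S_i$; $\lambda^{\mathbb{E}}_{\tau,\mathrm{bipartite}}$ is the operator norm of $A(I-M_{\mathrm{sides}})$ acting on $\ell^2(X_\tau(0),m;\mathbb{E})$.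 *)

theory Defs
  imports "HOL-Analysis.Analysis" "HOL-Algebra.Group"
begin

definition simplicial_complex :: "'v set set \<Rightarrow> bool" where
  "simplicial_complex X \<longleftrightarrow>
     (\<forall>\<sigma>\<in>X. finite \<sigma> \<and> \<sigma> \<noteq> {}) \<and>
     (\<forall>\<sigma>\<in>X. \<forall>\<tau>. \<tau> \<subseteq> \<sigma> \<and> \<tau> \<noteq> {} \<longrightarrow> \<tau> \<in> X)"

definition faces :: "'v set set \<Rightarrow> nat \<Rightarrow> 'v set set" where
  "faces X k = {\<sigma>\<in>X. card \<sigma> = k + 1}"

definition vertices :: "'v set set \<Rightarrow> 'v set" where
  "vertices X = {v. {v} \<in> X}"

definition stype :: "('v \<Rightarrow> nat) \<Rightarrow> 'v set \<Rightarrow> nat set" where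
  "stype col \<tau> = col ` \<tau>"

definition pure_partite_complex :: "nat \<Rightarrow> 'v set set \<Rightarrow> ('v \<Rightarrow> nat) \<Rightarrow> bool" where
  "pure_partite_complex n X col \<longleftrightarrow>
     simplicial_complex X \<and> faces X n \<noteq> {} \<and>
     (\<forall>\<sigma>\<in>X. \<exists>\<sigma>'\<in>faces X n. \<sigma> \<subseteq> \<sigma>') \<and>
     (\<forall>v\<in>vertices X. col v \<le> n) \<and>
     (\<forall>\<sigma>\<in>faces X n. bij_betw col \<sigma> {0..n})"

definition gallery_connected :: "nat \<Rightarrow> 'v set set \<Rightarrow> bool" where
  "gallery_connected n X \<longleftrightarrow>
     (\<forall>\<sigma>\<in>faces X n. \<forall>\<sigma>'\<in>faces X n.
        (\<sigma>, \<sigma>') \<in> {(a, b). a \<in> faces X n \<and> b \<in> faces X n \<and> card (a \<inter> b) = n}\<^sup>*)"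

definition link_vertices :: "'v set set \<Rightarrow> 'v set \<Rightarrow> 'v set" where
  "link_vertices X \<tau> = {v. v \<notin> \<tau> \<and> insert v \<tau> \<in> X}"

definition link_adj :: "nat \<Rightarrow> 'v set set \<Rightarrow> 'v set \<Rightarrow> 'v \<Rightarrow> 'v \<Rightarrow> bool" where
  "link_adj n X \<tau> u v \<longleftrightarrow> \<tau> \<union> {u, v} \<in> faces X n"

text \<open>vertex weight = degree (each edge has weight 1)\<close>
definition link_weight :: "nat \<Rightarrow> 'v set set \<Rightarrow> 'v set \<Rightarrow> 'v \<Rightarrow> real" where
  "link_weight n X \<tau> v = real (card {u. link_adj n X \<tau> u v})"

definition links_finite_connected :: "nat \<Rightarrow> 'v set set \<Rightarrow> bool" where
  "links_finite_connected n X \<longleftrightarrow>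
     (\<forall>\<tau>\<in>faces X (n - 2). finite (link_vertices X \<tau>) \<and>
        (\<forall>u\<in>link_vertices X \<tau>. \<forall>v\<in>link_vertices X \<tau>.
           (u, v) \<in> {(a, b). link_adj n X \<tau> a b}\<^sup>*))"

definition wl2_norm :: "'v set \<Rightarrow> ('v \<Rightarrow> real) \<Rightarrow> ('v \<Rightarrow> 'e::real_normed_vector) \<Rightarrow> real" where
  "wl2_norm V m \<phi> = sqrt (\<Sum>v\<in>V. m v * (norm (\<phi> v))\<^sup>2)"

definition graph_A :: "'v set \<Rightarrow> ('v \<Rightarrow> 'v \<Rightarrow> bool) \<Rightarrow> ('v \<Rightarrow> real)
      \<Rightarrow> ('v \<Rightarrow> 'e::real_normed_vector) \<Rightarrow> 'v \<Rightarrow> 'e" where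
  "graph_A V adj m \<phi> v = (1 / m v) *\<^sub>R (\<Sum>u\<in>{u\<in>V. adj u v}. \<phi> u)"

text \<open>projection onto functions constant on each side; the sides are the fibres of side\<close>
definition M_sides :: "'v set \<Rightarrow> ('v \<Rightarrow> 'c) \<Rightarrow> ('v \<Rightarrow> real)
      \<Rightarrow> ('v \<Rightarrow> 'e::real_normed_vector) \<Rightarrow> 'v \<Rightarrow> 'e" where
  "M_sides V side m \<phi> u =
     (let S = {w\<in>V. side w = side u} in (1 / (\<Sum>w\<in>S. m w)) *\<^sub>R (\<Sum>w\<in>S. m w *\<^sub>R \<phi> w))"

definition bipartite_lambda :: "'e::real_normed_vector itself \<Rightarrow> 'v set \<Rightarrow> ('v \<Rightarrow> 'v \<Rightarrow> bool)
      \<Rightarrow> ('v \<Rightarrow> 'c) \<Rightarrow> ('v \<Rightarrow> real) \<Rightarrow> real" where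
  "bipartite_lambda TYPE('e) V adj side m =
     Sup ((\<lambda>\<phi>::'v \<Rightarrow> 'e. wl2_norm V m (graph_A V adj m (\<lambda>v. \<phi> v - M_sides V side m \<phi> v)))
            ` {\<phi>. wl2_norm V m \<phi> \<le> 1})"

text \<open>lambda^E_{tau,bipartite}: sides are the colour classes of the link\<close>
definition link_lambda :: "'e::real_normed_vector itself \<Rightarrow> nat \<Rightarrow> 'v set set \<Rightarrow> ('v \<Rightarrow> nat)
      \<Rightarrow> 'v set \<Rightarrow> real" where
  "link_lambda E n X col \<tau> =
     bipartite_lambda E (link_vertices X \<tau>) (link_adj n X \<tau>) col (link_weight n X \<tau>)"

definition topological_group :: "('g, 'b) monoid_scheme \<Rightarrow> 'g topology \<Rightarrow> bool" where
  "topological_group G T \<longleftrightarrow> group G \<and> topspace T = carrier G \<and>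
     continuous_map (prod_topology T T) T (\<lambda>(x, y). x \<otimes>\<^bsub>G\<^esub> y) \<and>
     continuous_map T T (\<lambda>x. inv\<^bsub>G\<^esub> x)"

definition lc_group :: "('g, 'b) monoid_scheme \<Rightarrow> 'g topology \<Rightarrow> bool" where
  "lc_group G T \<longleftrightarrow> topological_group G T \<and> Hausdorff_space T \<and> locally_compact_space T"

definition haar_measure :: "('g, 'b) monoid_scheme \<Rightarrow> 'g topology \<Rightarrow> 'g measure \<Rightarrow> bool" where
  "haar_measure G T \<mu> \<longleftrightarrow>
     space \<mu> = topspace T \<and> sets \<mu> = sigma_sets (topspace T) (Collect (openin T)) \<and>
     (\<forall>g\<in>carrier G. \<forall>A\<in>sets \<mu>. emeasure \<mu> ((\<lambda>x. g \<otimes>\<^bsub>G\<^esub> x) ` A) = emeasure \<mu> A) \<and>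
     (\<forall>C. compactin T C \<longrightarrow> emeasure \<mu> C < \<infinity>) \<and>
     (\<forall>U. openin T U \<and> U \<noteq> {} \<longrightarrow> emeasure \<mu> U > 0) \<and>
     (\<forall>A\<in>sets \<mu>. emeasure \<mu> A = (INF U\<in>{U. openin T U \<and> A \<subseteq> U}. emeasure \<mu> U)) \<and>
     (\<forall>U. openin T U \<longrightarrow> emeasure \<mu> U = (SUP C\<in>{C. compactin T C \<and> C \<subseteq> U}. emeasure \<mu> C))"

definition unimodular_haar :: "('g, 'b) monoid_scheme \<Rightarrow> 'g topology \<Rightarrow> 'g measure \<Rightarrow> bool" where
  "unimodular_haar G T \<mu> \<longleftrightarrow> lc_group G T \<and> haar_measure G T \<mu> \<and>
     (\<forall>g\<in>carrier G. \<forall>A\<in>sets \<mu>. emeasure \<mu> ((\<lambda>x. x \<otimes>\<^bsub>G\<^esub> g) ` A) = emeasure \<mu> A)"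

definition strongly_continuous_rep ::
    "('g, 'b) monoid_scheme \<Rightarrow> 'g topology \<Rightarrow> ('g \<Rightarrow> ('e::banach \<Rightarrow>\<^sub>L 'e)) \<Rightarrow> bool" where
  "strongly_continuous_rep G T \<pi> \<longleftrightarrow>
     \<pi> \<one>\<^bsub>G\<^esub> = id_blinfun \<and>
     (\<forall>g\<in>carrier G. \<forall>h\<in>carrier G. \<pi> (g \<otimes>\<^bsub>G\<^esub> h) = \<pi> g o\<^sub>L \<pi> h) \<and>
     (\<forall>v. continuous_map T euclidean (\<lambda>g. blinfun_apply (\<pi> g) v))"

definition type_preserving_action ::
    "('g, 'b) monoid_scheme \<Rightarrow> 'v set set \<Rightarrow> ('v \<Rightarrow> nat) \<Rightarrow> ('g \<Rightarrow> 'v \<Rightarrow> 'v) \<Rightarrow> bool" where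
  "type_preserving_action G X col act \<longleftrightarrow>
     (\<forall>v\<in>vertices X. act \<one>\<^bsub>G\<^esub> v = v) \<and>
     (\<forall>g\<in>carrier G. \<forall>h\<in>carrier G. \<forall>v\<in>vertices X. act (g \<otimes>\<^bsub>G\<^esub> h) v = act g (act h v)) \<and>
     (\<forall>g\<in>carrier G. \<forall>\<sigma>\<in>X. act g ` \<sigma> \<in> X) \<and>
     (\<forall>g\<in>carrier G. \<forall>v\<in>vertices X. col (act g v) = col v)"

definition orbit :: "('g, 'b) monoid_scheme \<Rightarrow> ('g \<Rightarrow> 'v \<Rightarrow> 'v) \<Rightarrow> 'v set \<Rightarrow> 'v set set" where
  "orbit G act \<sigma> = {act g ` \<sigma> | g. g \<in> carrier G}"

definition cocompact :: "('g, 'b) monoid_scheme \<Rightarrow> 'v set set \<Rightarrow> ('g \<Rightarrow> 'v \<Rightarrow> 'v) \<Rightarrow> bool" where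
  "cocompact G X act \<longleftrightarrow> finite (orbit G act ` X)"

definition stab :: "('g, 'b) monoid_scheme \<Rightarrow> ('g \<Rightarrow> 'v \<Rightarrow> 'v) \<Rightarrow> 'v set \<Rightarrow> 'g set" where
  "stab G act \<sigma> = {g\<in>carrier G. act g ` \<sigma> = \<sigma>}"

definition orbit_reps :: "('g, 'b) monoid_scheme \<Rightarrow> ('g \<Rightarrow> 'v \<Rightarrow> 'v) \<Rightarrow> 'v set set \<Rightarrow> 'v set set \<Rightarrow> bool" where
  "orbit_reps G act Y D \<longleftrightarrow> D \<subseteq> Y \<and>
     (\<forall>\<sigma>\<in>Y. \<exists>\<tau>\<in>D. \<sigma> \<in> orbit G act \<tau>) \<and>
     (\<forall>\<tau>\<in>D. \<forall>\<tau>'\<in>D. \<tau>' \<in> orbit G act \<tau> \<longrightarrow> \<tau>' = \<tau>)"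

definition K_set :: "('g, 'b) monoid_scheme \<Rightarrow> ('g \<Rightarrow> 'v \<Rightarrow> 'v) \<Rightarrow> nat \<Rightarrow> 'v set set \<Rightarrow> 'g set" where
  "K_set G act n Dn = {g\<in>carrier G. \<exists>\<sigma>\<in>Dn. \<exists>\<sigma>'\<in>Dn. card (act g ` \<sigma> \<inter> \<sigma>') \<ge> n - 1}"

definition C_space :: "('g, 'b) monoid_scheme \<Rightarrow> ('g \<Rightarrow> 'v \<Rightarrow> 'v) \<Rightarrow> nat \<Rightarrow> 'v set set
      \<Rightarrow> ('g \<Rightarrow> ('e::banach \<Rightarrow>\<^sub>L 'e)) \<Rightarrow> ('v set \<Rightarrow> 'e) set" where
  "C_space G act n X \<pi> = {\<phi>. (\<forall>g\<in>carrier G. \<forall>\<sigma>\<in>faces X n. \<phi> (act g ` \<sigma>) = \<pi> g (\<phi> \<sigma>)) \<and>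
                              (\<forall>\<sigma>. \<sigma> \<notin> faces X n \<longrightarrow> \<phi> \<sigma> = 0)}"

definition C_norm :: "('g, 'b) monoid_scheme \<Rightarrow> ('g \<Rightarrow> 'v \<Rightarrow> 'v) \<Rightarrow> 'g measure \<Rightarrow> 'v set set
      \<Rightarrow> ('v set \<Rightarrow> 'e::banach) \<Rightarrow> real" where
  "C_norm G act \<mu> Dn \<phi> = sqrt (\<Sum>\<sigma>\<in>Dn. (norm (\<phi> \<sigma>))\<^sup>2 / measure \<mu> (stab G act \<sigma>))"

definition sim_nu :: "'v set set \<Rightarrow> ('v \<Rightarrow> nat) \<Rightarrow> nat set \<Rightarrow> 'v set \<Rightarrow> 'v set \<Rightarrow> bool" where
  "sim_nu X col \<nu> \<sigma> \<sigma>' \<longleftrightarrow> (\<exists>\<tau>. \<tau> \<in> X \<and> \<tau> \<subseteq> \<sigma> \<inter> \<sigma>' \<and> stype col \<tau> = \<nu>)"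

definition P_op :: "nat \<Rightarrow> 'v set set \<Rightarrow> ('v \<Rightarrow> nat) \<Rightarrow> nat set
      \<Rightarrow> ('v set \<Rightarrow> 'e::real_normed_vector) \<Rightarrow> 'v set \<Rightarrow> 'e" where
  "P_op n X col \<nu> \<phi> \<sigma> =
     (if \<sigma> \<in> faces X n then
        (let S = {\<sigma>'\<in>faces X n. sim_nu X col \<nu> \<sigma>' \<sigma>} in (1 / real (card S)) *\<^sub>R (\<Sum>\<sigma>'\<in>S. \<phi> \<sigma>'))
      else 0)"

definition op_norm_on :: "'a set \<Rightarrow> ('a \<Rightarrow> real) \<Rightarrow> ('a \<Rightarrow> 'a) \<Rightarrow> real" where
  "op_norm_on C N T = Sup ((\<lambda>\<phi>. N (T \<phi>)) ` {\<phi>\<in>C. N \<phi> \<le> 1})"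

end

theory Submission
  imports Defs
begin



section \<open>Generic facts on the bipartite operator norm\<close>

lemma wl2_nonneg: "(\<And>v. v \<in> V \<Longrightarrow> m v \<ge> 0) \<Longrightarrow> wl2_norm V m f \<ge> 0"
proof -
  assume m: "\<And>v. v \<in> V \<Longrightarrow> m v \<ge> 0"
  have "0 \<le> (\<Sum>v\<in>V. m v * (norm (f v))\<^sup>2)" by (rule sum_nonneg) (simp add: m)
  then show ?thesis unfolding wl2_norm_def by simp
qed

lemma wl2_sq: "(\<And>v. v \<in> V \<Longrightarrow> m v \<ge> 0) \<Longrightarrow> (wl2_norm V m f)\<^sup>2 = (\<Sum>v\<in>V. m v * (norm (f v))\<^sup>2)"
proof -
  assume m: "\<And>v. v \<in> V \<Longrightarrow> m v \<ge> 0"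
  have "0 \<le> (\<Sum>v\<in>V. m v * (norm (f v))\<^sup>2)" by (rule sum_nonneg) (simp add: m)
  then show ?thesis unfolding wl2_norm_def by simp
qed

lemma wl2_scale: "(\<And>v. v \<in> V \<Longrightarrow> m v \<ge> 0) \<Longrightarrow> wl2_norm V m (\<lambda>v. a *\<^sub>R f v) = \<bar>a\<bar> * wl2_norm V m f"
proof -
  assume m: "\<And>v. v \<in> V \<Longrightarrow> m v \<ge> 0"
  have "(\<Sum>v\<in>V. m v * (norm (a *\<^sub>R f v))\<^sup>2) = a\<^sup>2 * (\<Sum>v\<in>V. m v * (norm (f v))\<^sup>2)"
    by (simp add: sum_distrib_left power_mult_distrib algebra_simps)
  then show ?thesis unfolding wl2_norm_def by (simp add: real_sqrt_mult)
qed

lemma graph_A_scale: "graph_A V adj m (\<lambda>v. a *\<^sub>R f v) v = a *\<^sub>R graph_A V adj m f v"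
  unfolding graph_A_def by (simp add: scaleR_sum_right)

lemma M_sides_scale: "M_sides V side m (\<lambda>v. a *\<^sub>R f v) u = a *\<^sub>R M_sides V side m f u"
  unfolding M_sides_def Let_def by (simp add: scaleR_sum_right ac_simps)

lemma AM_scale: "graph_A V adj m (\<lambda>v. a *\<^sub>R f v - M_sides V side m (\<lambda>v. a *\<^sub>R f v) v) v
   = a *\<^sub>R graph_A V adj m (\<lambda>v. f v - M_sides V side m f v) v"
proof -
  have "(\<lambda>v. a *\<^sub>R f v - M_sides V side m (\<lambda>v. a *\<^sub>R f v) v) = (\<lambda>v. a *\<^sub>R (f v - M_sides V side m f v))"
    by (simp add: M_sides_scale scaleR_diff_right)
  then show ?thesis by (simp add: graph_A_scale)
qed

lemma wl2_cong: "(\<And>v. v \<in> V \<Longrightarrow> f v = g v) \<Longrightarrow> wl2_norm V m f = wl2_norm V m g"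
  unfolding wl2_norm_def by simp

lemma graph_A_cong: "(\<And>v. v \<in> V \<Longrightarrow> f v = g v) \<Longrightarrow> graph_A V adj m f u = graph_A V adj m g u"
  unfolding graph_A_def by simp

lemma M_sides_cong: "(\<And>v. v \<in> V \<Longrightarrow> f v = g v) \<Longrightarrow> M_sides V side m f u = M_sides V side m g u"
  unfolding M_sides_def Let_def by simp

lemma bl_bdd:
  fixes V :: "'v set" and m :: "'v \<Rightarrow> real"
  assumes V: "finite V" and m1: "\<And>v. v \<in> V \<Longrightarrow> m v \<ge> 1"
  shows "bdd_above ((\<lambda>\<phi>::'v \<Rightarrow> 'e::real_normed_vector. wl2_norm V m (graph_A V adj m (\<lambda>v. \<phi> v - M_sides V side m \<phi> v)))
            ` {\<phi>. wl2_norm V m \<phi> \<le> 1})"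
proof -
  define B where "B = sqrt (\<Sum>v\<in>V. m v * (2 * real (card V))\<^sup>2)"
  have m0: "\<And>v. v \<in> V \<Longrightarrow> m v \<ge> 0" using m1 by (meson order.trans zero_le_one)
  show ?thesis unfolding bdd_above_def
  proof (intro exI ballI)
    fix y assume "y \<in> (\<lambda>\<phi>::'v \<Rightarrow> 'e. wl2_norm V m (graph_A V adj m (\<lambda>v. \<phi> v - M_sides V side m \<phi> v))) ` {\<phi>. wl2_norm V m \<phi> \<le> 1}"
    then obtain \<phi> :: "'v \<Rightarrow> 'e" where ph: "wl2_norm V m \<phi> \<le> 1" and y: "y = wl2_norm V m (graph_A V adj m (\<lambda>v. \<phi> v - M_sides V side m \<phi> v))"
      by blast
    have s1: "(\<Sum>v\<in>V. m v * (norm (\<phi> v))\<^sup>2) \<le> 1"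
      using ph wl2_sq[of V m \<phi>, OF m0] wl2_nonneg[of V m \<phi>, OF m0]
      by (metis abs_of_nonneg power_le_one_iff real_sqrt_abs real_sqrt_le_1_iff wl2_norm_def)
    have b1: "norm (\<phi> v) \<le> 1" if v: "v \<in> V" for v
    proof -
      have "m v * (norm (\<phi> v))\<^sup>2 \<le> (\<Sum>v\<in>V. m v * (norm (\<phi> v))\<^sup>2)"
        using v V m0 by (intro member_le_sum) auto
      then have "m v * (norm (\<phi> v))\<^sup>2 \<le> 1" using s1 by linarith
      moreover have "(norm (\<phi> v))\<^sup>2 \<le> m v * (norm (\<phi> v))\<^sup>2" using m1[OF v]
        by (simp add: mult_le_cancel_right1)
      ultimately have "(norm (\<phi> v))\<^sup>2 \<le> 1" by linarith
      then show ?thesis by (simp add: power_le_one_iff)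
    qed
    have bM: "norm (M_sides V side m \<phi> u) \<le> 1" if u: "u \<in> V" for u
    proof -
      define S where "S = {w\<in>V. side w = side u}"
      have fS: "finite S" using V S_def by simp
      have uS: "u \<in> S" using u S_def by simp
      have SV: "S \<subseteq> V" using S_def by auto
      have pos: "(\<Sum>w\<in>S. m w) > 0"
      proof -
        have "(\<Sum>w\<in>S. m w) \<ge> m u" using member_le_sum[OF uS, of m] fS m0 SV by auto
        then show ?thesis using m1[OF u] by linarith
      qed
      have "norm (\<Sum>w\<in>S. m w *\<^sub>R \<phi> w) \<le> (\<Sum>w\<in>S. norm (m w *\<^sub>R \<phi> w))" by (rule norm_sum)
      also have "\<dots> \<le> (\<Sum>w\<in>S. m w)"
      proof (rule sum_mono)
        fix w assume w: "w \<in> S"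
        then have "w \<in> V" using SV by auto
        then show "norm (m w *\<^sub>R \<phi> w) \<le> m w" using b1[of w] m0[of w]
          by (simp add: mult_left_le)
      qed
      finally have "norm (\<Sum>w\<in>S. m w *\<^sub>R \<phi> w) \<le> (\<Sum>w\<in>S. m w)" .
      then have "norm ((1 / (\<Sum>w\<in>S. m w)) *\<^sub>R (\<Sum>w\<in>S. m w *\<^sub>R \<phi> w)) \<le> 1"
        using pos by (simp add: divide_le_eq)
      then show ?thesis unfolding M_sides_def Let_def S_def .
    qed
    define g where "g = (\<lambda>v. \<phi> v - M_sides V side m \<phi> v)"
    have bg: "norm (g u) \<le> 2" if "u \<in> V" for u
      using b1[OF that] bM[OF that] norm_triangle_ineq4[of "\<phi> u" "M_sides V side m \<phi> u"] unfolding g_def by linarith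
    have bA: "norm (graph_A V adj m g v) \<le> 2 * real (card V)" if v: "v \<in> V" for v
    proof -
      have "norm (\<Sum>u\<in>{u\<in>V. adj u v}. g u) \<le> (\<Sum>u\<in>{u\<in>V. adj u v}. norm (g u))" by (rule norm_sum)
      also have "\<dots> \<le> (\<Sum>u\<in>{u\<in>V. adj u v}. 2)" by (rule sum_mono) (use bg in auto)
      also have "\<dots> = 2 * real (card {u\<in>V. adj u v})" by simp
      also have "\<dots> \<le> 2 * real (card V)" using V by (simp add: card_mono)
      finally have "norm (\<Sum>u\<in>{u\<in>V. adj u v}. g u) \<le> 2 * real (card V)" .
      moreover have "1 / m v \<le> 1" using m1[OF v] by simp
      moreover have "1 / m v \<ge> 0" using m0[OF v] by simp
      ultimately have "(1 / m v) * norm (\<Sum>u\<in>{u\<in>V. adj u v}. g u) \<le> 1 * (2 * real (card V))"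
        by (intro mult_mono) auto
      then show ?thesis unfolding graph_A_def using m0[OF v] by simp
    qed
    have "(\<Sum>v\<in>V. m v * (norm (graph_A V adj m g v))\<^sup>2) \<le> (\<Sum>v\<in>V. m v * (2 * real (card V))\<^sup>2)"
    proof (rule sum_mono)
      fix v assume v: "v \<in> V"
      have "(norm (graph_A V adj m g v))\<^sup>2 \<le> (2 * real (card V))\<^sup>2"
        using bA[OF v] by (intro power_mono) auto
      then show "m v * (norm (graph_A V adj m g v))\<^sup>2 \<le> m v * (2 * real (card V))\<^sup>2"
        using m0[OF v] by (intro mult_left_mono) auto
    qed
    then have "y \<le> B" unfolding y B_def wl2_norm_def g_def[symmetric] by (rule real_sqrt_le_mono)
    then show "y \<le> B" .
  qed
qed

lemma bl_bound:
  fixes V :: "'v set" and m :: "'v \<Rightarrow> real" and f :: "'v \<Rightarrow> 'e::real_normed_vector"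
  assumes V: "finite V" and m1: "\<And>v. v \<in> V \<Longrightarrow> m v \<ge> 1"
  shows "wl2_norm V m (graph_A V adj m (\<lambda>v. f v - M_sides V side m f v))
          \<le> bipartite_lambda TYPE('e) V adj side m * wl2_norm V m f"
proof -
  have m0: "\<And>v. v \<in> V \<Longrightarrow> m v \<ge> 0" using m1 by (meson order.trans zero_le_one)
  let ?S = "(\<lambda>\<phi>::'v \<Rightarrow> 'e. wl2_norm V m (graph_A V adj m (\<lambda>v. \<phi> v - M_sides V side m \<phi> v))) ` {\<phi>. wl2_norm V m \<phi> \<le> 1}"
  have bdd: "bdd_above ?S" by (rule bl_bdd[OF V m1])
  have lam: "bipartite_lambda TYPE('e) V adj side m = Sup ?S" unfolding bipartite_lambda_def ..
  show ?thesis
  proof (cases "wl2_norm V m f = 0")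
    case True
    then have "(\<Sum>v\<in>V. m v * (norm (f v))\<^sup>2) = 0" unfolding wl2_norm_def by simp
    moreover have nn: "\<And>v. v \<in> V \<Longrightarrow> 0 \<le> m v * (norm (f v))\<^sup>2" using m0 by simp
    ultimately have "\<forall>v\<in>V. m v * (norm (f v))\<^sup>2 = 0"
      using sum_nonneg_eq_0_iff[OF V, of "\<lambda>v. m v * (norm (f v))\<^sup>2"] by blast
    then have f0: "\<And>v. v \<in> V \<Longrightarrow> f v = 0" using m1 by fastforce
    have "\<And>u. u \<in> V \<Longrightarrow> M_sides V side m f u = M_sides V side m (\<lambda>_. 0) u"
      by (rule M_sides_cong) (simp add: f0)
    then have "\<And>u. u \<in> V \<Longrightarrow> f u - M_sides V side m f u = 0"
      using f0 by (simp add: M_sides_def)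
    then have "\<And>v. graph_A V adj m (\<lambda>v. f v - M_sides V side m f v) v = 0"
      unfolding graph_A_def by simp
    then have "wl2_norm V m (graph_A V adj m (\<lambda>v. f v - M_sides V side m f v)) = 0"
      unfolding wl2_norm_def by simp
    then show ?thesis using True by simp
  next
    case False
    define r where "r = wl2_norm V m f"
    have r: "r > 0" using False wl2_nonneg[of V m f, OF m0] r_def by linarith
    define h where "h = (\<lambda>v. (1 / r) *\<^sub>R f v)"
    have "wl2_norm V m h = \<bar>1 / r\<bar> * r" unfolding h_def r_def by (rule wl2_scale[of V m "1 / wl2_norm V m f" f, OF m0])
    then have "wl2_norm V m h = 1" using r by simp
    then have mem: "wl2_norm V m (graph_A V adj m (\<lambda>v. h v - M_sides V side m h v)) \<in> ?S"
      by (intro rev_image_eqI[of h]) auto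
    have le: "wl2_norm V m (graph_A V adj m (\<lambda>v. h v - M_sides V side m h v)) \<le> bipartite_lambda TYPE('e) V adj side m"
      using cSup_upper[OF mem bdd] lam by linarith
    have "graph_A V adj m (\<lambda>v. h v - M_sides V side m h v) = (\<lambda>v. (1 / r) *\<^sub>R graph_A V adj m (\<lambda>v. f v - M_sides V side m f v) v)"
      unfolding h_def by (rule ext) (rule AM_scale)
    then have "wl2_norm V m (graph_A V adj m (\<lambda>v. h v - M_sides V side m h v)) = (1 / r) * wl2_norm V m (graph_A V adj m (\<lambda>v. f v - M_sides V side m f v))"
      using wl2_scale[of V m "1 / r" "graph_A V adj m (\<lambda>v. f v - M_sides V side m f v)", OF m0] r by simp
    then show ?thesis using le r unfolding r_def[symmetric] by (simp add: divide_le_eq mult.commute)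
  qed
qed

lemma bl_nonneg:
  fixes V :: "'v set" and m :: "'v \<Rightarrow> real"
  assumes V: "finite V" and m1: "\<And>v. v \<in> V \<Longrightarrow> m v \<ge> 1"
  shows "bipartite_lambda TYPE('e::real_normed_vector) V adj side m \<ge> 0"
proof -
  have m0: "\<And>v. v \<in> V \<Longrightarrow> m v \<ge> 0" using m1 by (meson order.trans zero_le_one)
  let ?S = "(\<lambda>\<phi>::'v \<Rightarrow> 'e. wl2_norm V m (graph_A V adj m (\<lambda>v. \<phi> v - M_sides V side m \<phi> v))) ` {\<phi>. wl2_norm V m \<phi> \<le> 1}"
  have bdd: "bdd_above ?S" by (rule bl_bdd[OF V m1])
  have "wl2_norm V m (\<lambda>_. 0::'e) = 0" unfolding wl2_norm_def by simp
  then have mem: "wl2_norm V m (graph_A V adj m (\<lambda>v. (\<lambda>_. 0::'e) v - M_sides V side m (\<lambda>_. 0) v)) \<in> ?S"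
    by (intro rev_image_eqI[of "\<lambda>_. 0"]) auto
  have lam: "bipartite_lambda TYPE('e) V adj side m = Sup ?S" unfolding bipartite_lambda_def ..
  have "0 \<le> wl2_norm V m (graph_A V adj m (\<lambda>v. (\<lambda>_. 0::'e) v - M_sides V side m (\<lambda>_. 0) v))"
    by (rule wl2_nonneg[OF m0])
  then show ?thesis using cSup_upper[OF mem bdd] lam by linarith
qed


section \<open>Uniform boundedness\<close>

lemma ubp:
  fixes A :: "'i \<Rightarrow> ('e::banach \<Rightarrow>\<^sub>L 'f::real_normed_vector)"
  assumes pw: "\<And>v. \<exists>B. \<forall>k\<in>K. norm (A k v) \<le> B"
  shows "\<exists>B. \<forall>k\<in>K. norm (A k) \<le> B"
proof -
  define Fm where "Fm m = {v. \<forall>k\<in>K. norm (A k v) \<le> real m}" for m :: nat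
  have cl: "closed (Fm m)" for m
  proof -
    have "Fm m = (\<Inter>k\<in>K. {v. norm (A k v) \<le> real m})" unfolding Fm_def by blast
    moreover have "closed {v. norm (A k v) \<le> real m}" for k
      by (rule closed_Collect_le) (intro continuous_intros)+
    ultimately show ?thesis by auto
  qed
  have cov: "(\<Union>m. Fm m) = UNIV"
  proof -
    have "v \<in> (\<Union>m. Fm m)" for v
    proof -
      obtain B where B: "\<forall>k\<in>K. norm (A k v) \<le> B" using pw by blast
      have "B \<le> real (nat \<lceil>B\<rceil>)" by linarith
      then have "v \<in> Fm (nat \<lceil>B\<rceil>)" unfolding Fm_def using B by force
      then show ?thesis by blast
    qed
    then show ?thesis by blast
  qed
  have "\<exists>m. euclidean interior_of (Fm m) \<noteq> {}"
  proof (rule ccontr)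
    assume "\<not> (\<exists>m. euclidean interior_of (Fm m) \<noteq> {})"
    then have e: "\<And>m. euclidean interior_of (Fm m) = {}" by blast
    have "euclidean interior_of \<Union>(range Fm) = {}"
    proof (rule Baire_category_alt)
      show "completely_metrizable_space (euclidean :: 'e topology) \<or> locally_compact_space (euclidean :: 'e topology) \<and> regular_space (euclidean :: 'e topology)"
        using completely_metrizable_space_euclidean by blast
      show "countable (range Fm)" by simp
      fix S assume "S \<in> range Fm"
      then show "closedin euclidean S \<and> euclidean interior_of S = {}" using cl e by auto
    qed
    then show False using cov by simp
  qed
  then obtain m x0 where "x0 \<in> euclidean interior_of (Fm m)" by blast
  then obtain U where U: "open U" "x0 \<in> U" "U \<subseteq> Fm m" unfolding interior_of_def by auto
  then obtain r where r: "r > 0" "ball x0 r \<subseteq> U" using open_contains_ball by blast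
  have small: "norm (A k y) \<le> 2 * real m" if k: "k \<in> K" and y: "norm y < r" for k y
  proof -
    have "x0 + y \<in> ball x0 r" using y by (simp add: dist_norm)
    then have "norm (A k (x0 + y)) \<le> real m" using r U k unfolding Fm_def by blast
    moreover have "norm (A k x0) \<le> real m" using U k r unfolding Fm_def by auto
    moreover have "A k y = A k (x0 + y) - A k x0" by (simp add: blinfun.add_right)
    ultimately show ?thesis using norm_triangle_ineq4[of "A k (x0 + y)" "A k x0"] by simp
  qed
  have "norm (A k) \<le> 4 * real m / r" if k: "k \<in> K" for k
  proof (rule norm_blinfun_bound)
    show "0 \<le> 4 * real m / r" using r by simp
    fix z
    show "norm (A k z) \<le> 4 * real m / r * norm z"
    proof (cases "z = 0")
      case True then show ?thesis by simp
    next
      case False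
      then have nz: "norm z > 0" by simp
      define y where "y = (r / (2 * norm z)) *\<^sub>R z"
      have ny: "norm y = r / 2" unfolding y_def using nz r by simp
      then have "norm (A k y) \<le> 2 * real m" using small[OF k] r by simp
      moreover have "norm (A k y) = (r / (2 * norm z)) * norm (A k z)"
        unfolding y_def using nz r by (simp add: blinfun.scaleR_right)
      ultimately have "(r / (2 * norm z)) * norm (A k z) \<le> 2 * real m" by simp
      then have "r * norm (A k z) \<le> 4 * real m * norm z" using nz by (simp add: field_simps)
      then show ?thesis using r by (simp add: field_simps)
    qed
  qed
  then show ?thesis by blast
qed

locale cx =
  fixes n :: nat and X :: "'a set set" and c :: "'a \<Rightarrow> nat"
  assumes n2: "n \<ge> 2" and cplx: "pure_partite_complex n X c"
    and links: "links_finite_connected n X"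
begin

abbreviation "F \<equiv> faces X n"

definition face :: "'a set \<Rightarrow> nat set \<Rightarrow> 'a set" where
  "face e \<kappa> = {v\<in>e. c v \<in> \<kappa>}"

lemma pp: "simplicial_complex X" "F \<noteq> {}" "\<And>\<sigma>. \<sigma> \<in> X \<Longrightarrow> \<exists>\<sigma>'\<in>F. \<sigma> \<subseteq> \<sigma>'"
  "\<And>v. v \<in> vertices X \<Longrightarrow> c v \<le> n" "\<And>\<sigma>. \<sigma> \<in> F \<Longrightarrow> bij_betw c \<sigma> {0..n}"
  using cplx unfolding pure_partite_complex_def by simp_all

lemma sc: "simplicial_complex X" by (rule pp(1))
lemma X_fin: "\<sigma> \<in> X \<Longrightarrow> finite \<sigma>" using sc unfolding simplicial_complex_def by blast
lemma X_ne: "\<sigma> \<in> X \<Longrightarrow> \<sigma> \<noteq> {}" using sc unfolding simplicial_complex_def by blast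
lemma X_sub: "\<sigma> \<in> X \<Longrightarrow> \<rho> \<subseteq> \<sigma> \<Longrightarrow> \<rho> \<noteq> {} \<Longrightarrow> \<rho> \<in> X"
  using sc unfolding simplicial_complex_def by blast

lemma F_X: "\<sigma> \<in> F \<Longrightarrow> \<sigma> \<in> X" by (simp add: faces_def)
lemma F_bij: "\<sigma> \<in> F \<Longrightarrow> bij_betw c \<sigma> {0..n}" by (rule pp(5))
lemma F_inj: "\<sigma> \<in> F \<Longrightarrow> inj_on c \<sigma>" using F_bij by (simp add: bij_betw_def)
lemma F_img: "\<sigma> \<in> F \<Longrightarrow> c ` \<sigma> = {0..n}" using F_bij by (simp add: bij_betw_def)
lemma F_card: "\<sigma> \<in> F \<Longrightarrow> card \<sigma> = n + 1" by (simp add: faces_def)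
lemma F_fin: "\<sigma> \<in> F \<Longrightarrow> finite \<sigma>" using F_X X_fin by blast
lemma in_top: "\<sigma> \<in> X \<Longrightarrow> \<exists>\<sigma>'\<in>F. \<sigma> \<subseteq> \<sigma>'" by (rule pp(3))
lemma F_ne: "F \<noteq> {}" by (rule pp(2))

lemma face_sub: "face e \<kappa> \<subseteq> e" by (auto simp: face_def)

lemma face_img: "e \<in> F \<Longrightarrow> \<kappa> \<subseteq> {0..n} \<Longrightarrow> c ` face e \<kappa> = \<kappa>"
proof -
  assume a: "e \<in> F" "\<kappa> \<subseteq> {0..n}"
  show ?thesis
  proof
    show "c ` face e \<kappa> \<subseteq> \<kappa>" by (auto simp: face_def)
    show "\<kappa> \<subseteq> c ` face e \<kappa>"
    proof
      fix k assume "k \<in> \<kappa>"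
      then have "k \<in> c ` e" using a F_img by auto
      then obtain v where "v \<in> e" "c v = k" by auto
      then show "k \<in> c ` face e \<kappa>" using \<open>k \<in> \<kappa>\<close> by (auto simp: face_def)
    qed
  qed
qed

lemma face_card: "e \<in> F \<Longrightarrow> \<kappa> \<subseteq> {0..n} \<Longrightarrow> card (face e \<kappa>) = card \<kappa>"
  by (metis face_img face_sub F_inj card_image inj_on_subset)

lemma face_unique: "e \<in> F \<Longrightarrow> \<rho> \<subseteq> e \<Longrightarrow> c ` \<rho> = \<kappa> \<Longrightarrow> \<rho> = face e \<kappa>"
proof -
  assume a: "e \<in> F" "\<rho> \<subseteq> e" "c ` \<rho> = \<kappa>"
  show ?thesis
  proof
    show "\<rho> \<subseteq> face e \<kappa>" using a by (auto simp: face_def)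
    show "face e \<kappa> \<subseteq> \<rho>"
    proof
      fix v assume v: "v \<in> face e \<kappa>"
      then have "c v \<in> c ` \<rho>" using a by (auto simp: face_def)
      then obtain w where "w \<in> \<rho>" "c w = c v" by auto
      then show "v \<in> \<rho>" using F_inj[OF a(1)] a(2) v unfolding inj_on_def face_def by auto
    qed
  qed
qed

lemma face_X: "e \<in> F \<Longrightarrow> \<kappa> \<subseteq> {0..n} \<Longrightarrow> \<kappa> \<noteq> {} \<Longrightarrow> face e \<kappa> \<in> X"
  by (metis F_X X_sub face_img face_sub image_empty)

lemma sim_char:
  assumes "\<sigma>' \<in> F" "e \<in> F" "\<kappa> \<subseteq> {0..n}" "\<kappa> \<noteq> {}"
  shows "sim_nu X c \<kappa> \<sigma>' e \<longleftrightarrow> face e \<kappa> \<subseteq> \<sigma>'"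
proof
  assume "sim_nu X c \<kappa> \<sigma>' e"
  then obtain \<tau> where "\<tau> \<in> X" "\<tau> \<subseteq> \<sigma>' \<inter> e" "c ` \<tau> = \<kappa>" unfolding sim_nu_def stype_def by auto
  then show "face e \<kappa> \<subseteq> \<sigma>'" using face_unique[OF assms(2)] by auto
next
  assume "face e \<kappa> \<subseteq> \<sigma>'"
  then show "sim_nu X c \<kappa> \<sigma>' e" unfolding sim_nu_def stype_def
    using face_X[OF assms(2-4)] face_img[OF assms(2,3)] face_sub[of e \<kappa>] by (intro exI[of _ "face e \<kappa>"]) auto
qed

end

locale loc = cx +
  fixes \<tau> and \<alpha> \<beta> :: nat
  assumes \<tau>F: "\<tau> \<in> faces X (n - 2)" and \<alpha>n: "\<alpha> \<le> n" and \<beta>n: "\<beta> \<le> n" and \<alpha>\<beta>: "\<alpha> \<noteq> \<beta>"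
    and \<tau>type: "c ` \<tau> = {0..n} - {\<alpha>, \<beta>}"
begin

definition "V = link_vertices X \<tau>"
definition "E = {e\<in>F. \<tau> \<subseteq> e}"
definition "m = link_weight n X \<tau>"
abbreviation "adj \<equiv> link_adj n X \<tau>"
definition vx :: "nat \<Rightarrow> 'a set \<Rightarrow> 'a" where "vx \<gamma> e = inv_into e c \<gamma>"

lemma \<tau>X: "\<tau> \<in> X" using \<tau>F by (simp add: faces_def)
lemma \<tau>card: "card \<tau> = n - 1" using \<tau>F n2 by (simp add: faces_def)
lemma \<tau>fin: "finite \<tau>" using \<tau>X X_fin by blast
lemma \<tau>ne: "\<tau> \<noteq> {}" using \<tau>X X_ne by blast

lemma V_fin: "finite V"
proof -
  have "\<forall>\<tau>\<in>faces X (n - 2). finite (link_vertices X \<tau>) \<and>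
        (\<forall>u\<in>link_vertices X \<tau>. \<forall>v\<in>link_vertices X \<tau>. (u, v) \<in> {(a, b). link_adj n X \<tau> a b}\<^sup>*)"
    using links unfolding links_finite_connected_def .
  from bspec[OF this \<tau>F] show ?thesis unfolding V_def by (rule conjunct1)
qed

lemma vx_in: "e \<in> F \<Longrightarrow> \<gamma> \<le> n \<Longrightarrow> vx \<gamma> e \<in> e \<and> c (vx \<gamma> e) = \<gamma>"
proof -
  assume a: "e \<in> F" "\<gamma> \<le> n"
  then have "\<gamma> \<in> c ` e" using F_img[OF a(1)] by auto
  then show ?thesis unfolding vx_def by (simp add: inv_into_into f_inv_into_f)
qed

lemma vx_eq: "e \<in> F \<Longrightarrow> x \<in> e \<Longrightarrow> c x = \<gamma> \<Longrightarrow> vx \<gamma> e = x"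
  unfolding vx_def using F_inj inv_into_f_f by metis

lemma \<tau>col: "x \<in> \<tau> \<Longrightarrow> c x \<noteq> \<alpha> \<and> c x \<noteq> \<beta>"
proof -
  assume "x \<in> \<tau>"
  then have "c x \<in> c ` \<tau>" by blast
  then show ?thesis using \<tau>type by auto
qed

lemma E_F: "e \<in> E \<Longrightarrow> e \<in> F" by (simp add: E_def)
lemma E_sub: "e \<in> E \<Longrightarrow> \<tau> \<subseteq> e" by (simp add: E_def)

lemma E_face: "e \<in> E \<Longrightarrow> face e ({0..n} - {\<alpha>, \<beta>}) = \<tau>"
  using face_unique[of e \<tau>] \<tau>type E_F E_sub by metis

lemma E_decomp: "e \<in> E \<Longrightarrow> e = insert (vx \<alpha> e) (insert (vx \<beta> e) \<tau>)"
proof -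
  assume e: "e \<in> E"
  have a: "vx \<alpha> e \<in> e" "c (vx \<alpha> e) = \<alpha>" using vx_in[OF E_F[OF e] \<alpha>n] by auto
  have b: "vx \<beta> e \<in> e" "c (vx \<beta> e) = \<beta>" using vx_in[OF E_F[OF e] \<beta>n] by auto
  show ?thesis
  proof
    show "insert (vx \<alpha> e) (insert (vx \<beta> e) \<tau>) \<subseteq> e" using a b E_sub[OF e] by auto
    show "e \<subseteq> insert (vx \<alpha> e) (insert (vx \<beta> e) \<tau>)"
    proof
      fix v assume v: "v \<in> e"
      have "c v \<in> {0..n}" using v F_img[OF E_F[OF e]] by auto
      moreover have "c v = \<alpha> \<Longrightarrow> v = vx \<alpha> e" using vx_eq[OF E_F[OF e] v] by simp
      moreover have "c v = \<beta> \<Longrightarrow> v = vx \<beta> e" using vx_eq[OF E_F[OF e] v] by simp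
      moreover have "c v \<in> {0..n} - {\<alpha>, \<beta>} \<Longrightarrow> v \<in> \<tau>"
        using E_face[OF e] v unfolding face_def by blast
      ultimately show "v \<in> insert (vx \<alpha> e) (insert (vx \<beta> e) \<tau>)" by blast
    qed
  qed
qed

lemma vx_props: "e \<in> E \<Longrightarrow> \<gamma> \<in> {\<alpha>, \<beta>} \<Longrightarrow> vx \<gamma> e \<in> e \<and> c (vx \<gamma> e) = \<gamma> \<and> vx \<gamma> e \<notin> \<tau> \<and> vx \<gamma> e \<in> V"
proof -
  assume e: "e \<in> E" and ch: "\<gamma> \<in> {\<alpha>, \<beta>}"
  have "\<gamma> \<le> n" using ch \<alpha>n \<beta>n by auto
  then have a: "vx \<gamma> e \<in> e" "c (vx \<gamma> e) = \<gamma>" using vx_in[OF E_F[OF e]] by auto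
  have nt: "vx \<gamma> e \<notin> \<tau>" using a(2) ch \<tau>col by blast
  have "insert (vx \<gamma> e) \<tau> \<in> X" using X_sub[OF F_X[OF E_F[OF e]]] a(1) E_sub[OF e] by blast
  then have "vx \<gamma> e \<in> V" using nt unfolding V_def link_vertices_def by simp
  then show ?thesis using a nt by blast
qed

lemma adj_iff: "adj u w \<longleftrightarrow> insert u (insert w \<tau>) \<in> F"
  unfolding link_adj_def by (simp add: insert_commute)

lemma adj_props:
  assumes "adj u w"
  shows "insert u (insert w \<tau>) \<in> E" "u \<notin> \<tau>" "w \<notin> \<tau>" "u \<noteq> w"
proof -
  have f: "insert u (insert w \<tau>) \<in> F" using assms adj_iff by blast
  then show "insert u (insert w \<tau>) \<in> E" unfolding E_def by blast
  have c1: "card (insert u (insert w \<tau>)) = n + 1" using F_card[OF f] .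
  have "card (insert u (insert w \<tau>)) \<le> card \<tau> + 1" if "u \<in> \<tau> \<or> w \<in> \<tau> \<or> u = w"
  proof -
    have "card (insert u (insert w \<tau>)) \<le> Suc (card (insert w \<tau>))" by (simp add: card_insert_le_m1 \<tau>fin card_insert_if)
    show ?thesis using that \<tau>fin by (auto simp: card_insert_if)
  qed
  then have "\<not> (u \<in> \<tau> \<or> w \<in> \<tau> \<or> u = w)" using c1 \<tau>card n2 by fastforce
  then show "u \<notin> \<tau>" "w \<notin> \<tau>" "u \<noteq> w" by auto
qed

lemma adj_V: "adj u w \<Longrightarrow> u \<in> V \<and> w \<in> V"
proof -
  assume a: "adj u w"
  have f: "insert u (insert w \<tau>) \<in> X" using adj_props(1)[OF a] E_F F_X by blast
  have "insert u \<tau> \<in> X" "insert w \<tau> \<in> X" using X_sub[OF f] by auto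
  then show ?thesis using adj_props[OF a] unfolding V_def link_vertices_def by auto
qed

lemma adj_col: "adj u w \<Longrightarrow> c u \<noteq> c w"
proof -
  assume a: "adj u w"
  have f: "insert u (insert w \<tau>) \<in> F" using adj_props(1)[OF a] E_F by blast
  show ?thesis using F_inj[OF f] adj_props(4)[OF a] unfolding inj_on_def by auto
qed

lemma V_props: "w \<in> V \<Longrightarrow> w \<notin> \<tau> \<and> (\<exists>e\<in>E. w \<in> e) \<and> (c w = \<alpha> \<or> c w = \<beta>)"
proof -
  assume w: "w \<in> V"
  then have nt: "w \<notin> \<tau>" and ins: "insert w \<tau> \<in> X" unfolding V_def link_vertices_def by auto
  obtain e where e: "e \<in> F" "insert w \<tau> \<subseteq> e" using in_top[OF ins] by blast
  then have eE: "e \<in> E" unfolding E_def by blast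
  have "w \<in> insert (vx \<alpha> e) (insert (vx \<beta> e) \<tau>)" using E_decomp[OF eE] e by blast
  then have "c w = \<alpha> \<or> c w = \<beta>" using nt vx_props[OF eE] by auto
  then show ?thesis using nt eE e by blast
qed

lemma E_w: "e \<in> E \<Longrightarrow> w \<in> e \<Longrightarrow> w \<notin> \<tau> \<Longrightarrow> \<exists>u. adj u w \<and> e = insert u (insert w \<tau>)"
proof -
  assume e: "e \<in> E" and w: "w \<in> e" "w \<notin> \<tau>"
  have d: "e = insert (vx \<alpha> e) (insert (vx \<beta> e) \<tau>)" by (rule E_decomp[OF e])
  then have "w = vx \<alpha> e \<or> w = vx \<beta> e" using w by blast
  then obtain u where "e = insert u (insert w \<tau>)" using d by (metis insert_commute)
  moreover then have "adj u w" using adj_iff E_F[OF e] by simp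
  ultimately show ?thesis by blast
qed

lemma E_fin: "finite E"
proof -
  have "E \<subseteq> (\<lambda>(u, w). insert u (insert w \<tau>)) ` (V \<times> V)"
  proof
    fix e assume e: "e \<in> E"
    then have "e = (\<lambda>(u, w). insert u (insert w \<tau>)) (vx \<alpha> e, vx \<beta> e)" using E_decomp by simp
    moreover have "(vx \<alpha> e, vx \<beta> e) \<in> V \<times> V" using vx_props[OF e] by simp
    ultimately show "e \<in> (\<lambda>(u, w). insert u (insert w \<tau>)) ` (V \<times> V)" by blast
  qed
  then show ?thesis using V_fin finite_subset by blast
qed

lemma adj_bij: "w \<notin> \<tau> \<Longrightarrow> bij_betw (\<lambda>u. insert u (insert w \<tau>)) {u. adj u w} {e\<in>E. w \<in> e}"
proof -
  assume w: "w \<notin> \<tau>"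
  show ?thesis unfolding bij_betw_def
  proof
    show "inj_on (\<lambda>u. insert u (insert w \<tau>)) {u. adj u w}"
    proof (rule inj_onI)
      fix u u' assume u: "u \<in> {u. adj u w}" and u': "u' \<in> {u. adj u w}"
        and eq: "insert u (insert w \<tau>) = insert u' (insert w \<tau>)"
      have "u \<noteq> w" "u \<notin> \<tau>" using adj_props u by auto
      then show "u = u'" using eq by (metis insertE insertI1)
    qed
    show "(\<lambda>u. insert u (insert w \<tau>)) ` {u. adj u w} = {e \<in> E. w \<in> e}"
    proof
      show "(\<lambda>u. insert u (insert w \<tau>)) ` {u. adj u w} \<subseteq> {e \<in> E. w \<in> e}"
        using adj_props(1) by auto
      show "{e \<in> E. w \<in> e} \<subseteq> (\<lambda>u. insert u (insert w \<tau>)) ` {u. adj u w}"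
        using E_w w by blast
    qed
  qed
qed

lemma m_card: "w \<notin> \<tau> \<Longrightarrow> m w = real (card {e\<in>E. w \<in> e})"
  unfolding m_def link_weight_def using bij_betw_same_card[OF adj_bij] by simp

lemma adj_fin: "finite {u. adj u w}"
proof -
  have "{u. adj u w} \<subseteq> V" using adj_V by blast
  then show ?thesis using V_fin finite_subset by blast
qed

lemma m_pos: "w \<in> V \<Longrightarrow> m w > 0"
proof -
  assume w: "w \<in> V"
  then obtain e where "e \<in> E" "w \<in> e" using V_props by blast
  then have "{e\<in>E. w \<in> e} \<noteq> {}" by blast
  then have "card {e\<in>E. w \<in> e} > 0" using E_fin by (simp add: card_gt_0_iff)
  then show ?thesis using m_card V_props w by simp
qed

lemma sum_swap: "\<gamma> \<in> {\<alpha>, \<beta>} \<Longrightarrow> (\<Sum>w\<in>{w\<in>V. c w = \<gamma>}. \<Sum>e\<in>{e\<in>E. w \<in> e}. f e) = sum f E"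
proof -
  assume ch: "\<gamma> \<in> {\<alpha>, \<beta>}"
  have fV: "finite {w\<in>V. c w = \<gamma>}" using V_fin by simp
  have "(\<Sum>w\<in>{w\<in>V. c w = \<gamma>}. \<Sum>e\<in>{e\<in>E. w \<in> e}. f e) = (\<Sum>e\<in>E. \<Sum>w\<in>{w\<in>{w\<in>V. c w = \<gamma>}. w \<in> e}. f e)"
    using sum.swap_restrict[OF fV E_fin, of "\<lambda>w e. f e" "\<lambda>w e. w \<in> e"] by simp
  also have "\<dots> = (\<Sum>e\<in>E. f e)"
  proof (rule sum.cong[OF refl])
    fix e assume e: "e \<in> E"
    have "{w\<in>{w\<in>V. c w = \<gamma>}. w \<in> e} = {vx \<gamma> e}"
      using vx_props[OF e ch] vx_eq[OF E_F[OF e]] by auto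
    then show "(\<Sum>w\<in>{w\<in>{w\<in>V. c w = \<gamma>}. w \<in> e}. f e) = f e" by simp
  qed
  finally show ?thesis .
qed

lemma face_nu:
  assumes e: "e \<in> E" and g: "\<gamma> \<in> {\<alpha>, \<beta>}" "\<gamma>' \<in> {\<alpha>, \<beta>}" "\<gamma> \<noteq> \<gamma>'"
  shows "face e ({0..n} - {\<gamma>'}) = insert (vx \<gamma> e) \<tau>"
proof
  show "face e ({0..n} - {\<gamma>'}) \<subseteq> insert (vx \<gamma> e) \<tau>"
  proof
    fix v assume v: "v \<in> face e ({0..n} - {\<gamma>'})"
    then have ve: "v \<in> e" "c v \<noteq> \<gamma>'" by (auto simp: face_def)
    have "v \<in> insert (vx \<alpha> e) (insert (vx \<beta> e) \<tau>)" using E_decomp[OF e] ve(1) by blast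
    moreover have "c (vx \<gamma>' e) = \<gamma>'" using vx_props[OF e g(2)] by blast
    moreover have "vx \<alpha> e = vx \<gamma> e \<or> vx \<alpha> e = vx \<gamma>' e" "vx \<beta> e = vx \<gamma> e \<or> vx \<beta> e = vx \<gamma>' e"
      using g by auto
    ultimately show "v \<in> insert (vx \<gamma> e) \<tau>" using ve(2) by auto
  qed
  have cn: "\<And>v. v \<in> e \<Longrightarrow> c v \<le> n" using F_img[OF E_F[OF e]] by auto
  show "insert (vx \<gamma> e) \<tau> \<subseteq> face e ({0..n} - {\<gamma>'})"
  proof
    fix v assume v: "v \<in> insert (vx \<gamma> e) \<tau>"
    then have ve: "v \<in> e" using vx_props[OF e g(1)] E_sub[OF e] by blast
    have "c v \<noteq> \<gamma>'" using v vx_props[OF e g(1)] g \<tau>col by auto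
    then show "v \<in> face e ({0..n} - {\<gamma>'})" using ve cn[OF ve] unfolding face_def by auto
  qed
qed

lemma S_gen:
  assumes e: "e \<in> E" and g: "\<gamma> \<in> {\<alpha>, \<beta>}" "\<gamma>' \<in> {\<alpha>, \<beta>}" "\<gamma> \<noteq> \<gamma>'"
  shows "{\<sigma>'\<in>F. sim_nu X c ({0..n} - {\<gamma>'}) \<sigma>' e} = {\<sigma>'\<in>E. vx \<gamma> e \<in> \<sigma>'}"
proof -
  have "\<gamma> \<in> {0..n} - {\<gamma>'}" using g \<alpha>n \<beta>n by auto
  then have ne: "{0..n} - {\<gamma>'} \<noteq> {}" by blast
  have sub: "{0..n} - {\<gamma>'} \<subseteq> {0..n}" by blast
  have h: "sim_nu X c ({0..n} - {\<gamma>'}) \<sigma>' e \<longleftrightarrow> insert (vx \<gamma> e) \<tau> \<subseteq> \<sigma>'" if s: "\<sigma>' \<in> F" for \<sigma>'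
    using sim_char[OF s E_F[OF e] sub ne] unfolding face_nu[OF e g] .
  show ?thesis
  proof (rule Set.set_eqI)
    fix \<sigma>'
    show "\<sigma>' \<in> {\<sigma>'\<in>F. sim_nu X c ({0..n} - {\<gamma>'}) \<sigma>' e} \<longleftrightarrow> \<sigma>' \<in> {\<sigma>'\<in>E. vx \<gamma> e \<in> \<sigma>'}"
      using h[of \<sigma>'] unfolding E_def by blast
  qed
qed

lemma S_I:
  assumes e: "e \<in> E"
  shows "{\<sigma>'\<in>F. sim_nu X c ({0..n} - {\<alpha>, \<beta>}) \<sigma>' e} = E"
proof -
  have ne: "{0..n} - {\<alpha>, \<beta>} \<noteq> {}" using \<tau>type \<tau>ne by (metis image_is_empty)
  have sub: "{0..n} - {\<alpha>, \<beta>} \<subseteq> {0..n}" by blast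
  have h: "sim_nu X c ({0..n} - {\<alpha>, \<beta>}) \<sigma>' e \<longleftrightarrow> \<tau> \<subseteq> \<sigma>'" if s: "\<sigma>' \<in> F" for \<sigma>'
    using sim_char[OF s E_F[OF e] sub ne] unfolding E_face[OF e] .
  show ?thesis
  proof (rule Set.set_eqI)
    fix \<sigma>'
    show "\<sigma>' \<in> {\<sigma>'\<in>F. sim_nu X c ({0..n} - {\<alpha>, \<beta>}) \<sigma>' e} \<longleftrightarrow> \<sigma>' \<in> E"
      using h[of \<sigma>'] unfolding E_def by blast
  qed
qed

definition psi :: "('a set \<Rightarrow> 'e::real_normed_vector) \<Rightarrow> 'a \<Rightarrow> 'e" where
  "psi \<phi> w = (1 / m w) *\<^sub>R (\<Sum>e\<in>{e\<in>E. w \<in> e}. \<phi> e)"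

definition mean :: "('a set \<Rightarrow> 'e::real_normed_vector) \<Rightarrow> 'e" where
  "mean \<phi> = (1 / real (card E)) *\<^sub>R sum \<phi> E"

lemma P_b: "e \<in> E \<Longrightarrow> P_op n X c ({0..n} - {\<beta>}) \<phi> e = psi \<phi> (vx \<alpha> e)"
proof -
  assume e: "e \<in> E"
  have S: "{\<sigma>'\<in>F. sim_nu X c ({0..n} - {\<beta>}) \<sigma>' e} = {\<sigma>'\<in>E. vx \<alpha> e \<in> \<sigma>'}"
    using S_gen[OF e, of \<alpha> \<beta>] \<alpha>\<beta> by auto
  have m: "m (vx \<alpha> e) = real (card {\<sigma>'\<in>E. vx \<alpha> e \<in> \<sigma>'})" using m_card vx_props[OF e] by auto
  show ?thesis unfolding P_op_def Let_def psi_def using E_F[OF e] S m by simp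
qed

lemma P_I: "e \<in> E \<Longrightarrow> P_op n X c ({0..n} - {\<alpha>, \<beta>}) \<phi> e = mean \<phi>"
  unfolding P_op_def Let_def mean_def using E_F S_I by simp

lemma adj_col_\<alpha>: "adj u b \<Longrightarrow> c b = \<beta> \<Longrightarrow> c u = \<alpha>"
  using adj_V adj_col V_props by metis

lemma P_ab: "e \<in> E \<Longrightarrow> P_op n X c ({0..n} - {\<alpha>}) (P_op n X c ({0..n} - {\<beta>}) \<phi>) e
   = (1 / m (vx \<beta> e)) *\<^sub>R (\<Sum>u\<in>{u. adj u (vx \<beta> e)}. psi \<phi> u)"
proof -
  assume e: "e \<in> E"
  define b where "b = vx \<beta> e"
  have bp: "b \<in> e" "c b = \<beta>" "b \<notin> \<tau>" "b \<in> V" using vx_props[OF e, of \<beta>] b_def by auto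
  have S: "{\<sigma>'\<in>F. sim_nu X c ({0..n} - {\<alpha>}) \<sigma>' e} = {\<sigma>'\<in>E. b \<in> \<sigma>'}"
    using S_gen[OF e, of \<beta> \<alpha>] \<alpha>\<beta> b_def by auto
  have m: "m b = real (card {\<sigma>'\<in>E. b \<in> \<sigma>'})" using m_card bp by auto
  have "(\<Sum>\<sigma>'\<in>{\<sigma>'\<in>E. b \<in> \<sigma>'}. P_op n X c ({0..n} - {\<beta>}) \<phi> \<sigma>')
      = (\<Sum>\<sigma>'\<in>{\<sigma>'\<in>E. b \<in> \<sigma>'}. psi \<phi> (vx \<alpha> \<sigma>'))"
    by (rule sum.cong) (auto simp: P_b)
  also have "\<dots> = (\<Sum>u\<in>{u. adj u b}. psi \<phi> (vx \<alpha> (insert u (insert b \<tau>))))"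
    using sum.reindex_bij_betw[OF adj_bij[OF bp(3)], of "\<lambda>\<sigma>'. psi \<phi> (vx \<alpha> \<sigma>')"] by simp
  also have "\<dots> = (\<Sum>u\<in>{u. adj u b}. psi \<phi> u)"
  proof (rule sum.cong[OF refl])
    fix u assume u: "u \<in> {u. adj u b}"
    have "insert u (insert b \<tau>) \<in> F" using u adj_iff by auto
    moreover have "c u = \<alpha>" using adj_col_\<alpha> u bp by auto
    ultimately have "vx \<alpha> (insert u (insert b \<tau>)) = u" using vx_eq by blast
    then show "psi \<phi> (vx \<alpha> (insert u (insert b \<tau>))) = psi \<phi> u" by simp
  qed
  finally have sm: "(\<Sum>\<sigma>'\<in>{\<sigma>'\<in>E. b \<in> \<sigma>'}. P_op n X c ({0..n} - {\<beta>}) \<phi> \<sigma>') = (\<Sum>u\<in>{u. adj u b}. psi \<phi> u)" .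
  show ?thesis unfolding P_op_def[of n X c "{0..n} - {\<alpha>}"] Let_def using E_F[OF e] S m sm b_def by simp
qed

lemma m1: "w \<in> V \<Longrightarrow> m w \<ge> 1"
proof -
  assume w: "w \<in> V"
  then obtain e where "e \<in> E" "w \<in> e" using V_props by blast
  then have "{e\<in>E. w \<in> e} \<noteq> {}" by blast
  then have "card {e\<in>E. w \<in> e} \<ge> 1" using E_fin by (simp add: Suc_leI card_gt_0_iff)
  then show ?thesis using m_card V_props w by simp
qed

lemma m_adj: "m b = real (card {u. adj u b})" unfolding m_def link_weight_def ..

theorem local_bound:
  fixes \<phi> :: "'a set \<Rightarrow> 'e::real_normed_vector"
  shows "(\<Sum>e\<in>E. (norm (P_op n X c ({0..n} - {\<alpha>}) (P_op n X c ({0..n} - {\<beta>}) \<phi>) e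
                 - P_op n X c ({0..n} - {\<alpha>, \<beta>}) \<phi> e))\<^sup>2)
         \<le> (link_lambda TYPE('e) n X c \<tau>)\<^sup>2 * (\<Sum>e\<in>E. (norm (\<phi> e))\<^sup>2)"
proof -
  define T where "T e = P_op n X c ({0..n} - {\<alpha>}) (P_op n X c ({0..n} - {\<beta>}) \<phi>) e
                 - P_op n X c ({0..n} - {\<alpha>, \<beta>}) \<phi> e" for e
  define f where "f w = (if c w = \<alpha> then psi \<phi> w else 0)" for w
  define g where "g v = f v - M_sides V c m f v" for v
  define lam where "lam = link_lambda TYPE('e) n X c \<tau>"
  have lam_eq: "lam = bipartite_lambda TYPE('e) V adj c m"
    unfolding lam_def link_lambda_def V_def m_def ..
  have m0: "\<And>v. v \<in> V \<Longrightarrow> m v \<ge> 0" using m1 by (meson order.trans zero_le_one)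
  have lam0: "lam \<ge> 0" unfolding lam_eq by (rule bl_nonneg[OF V_fin m1])
  have bound: "wl2_norm V m (graph_A V adj m g) \<le> lam * wl2_norm V m f"
    unfolding lam_eq g_def by (rule bl_bound[OF V_fin m1])
  have sum_m: "(\<Sum>w\<in>{w\<in>V. c w = \<alpha>}. m w) = real (card E)"
  proof -
    have "(\<Sum>w\<in>{w\<in>V. c w = \<alpha>}. m w) = (\<Sum>w\<in>{w\<in>V. c w = \<alpha>}. \<Sum>e\<in>{e\<in>E. w \<in> e}. (1::real))"
      by (rule sum.cong[OF refl]) (simp add: m_card V_props)
    also have "\<dots> = (\<Sum>e\<in>E. (1::real))" by (rule sum_swap) simp
    also have "\<dots> = real (card E)" by simp
    finally show ?thesis .
  qed
  have sum_mf: "(\<Sum>w\<in>{w\<in>V. c w = \<alpha>}. m w *\<^sub>R f w) = sum \<phi> E"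
  proof -
    have "(\<Sum>w\<in>{w\<in>V. c w = \<alpha>}. m w *\<^sub>R f w) = (\<Sum>w\<in>{w\<in>V. c w = \<alpha>}. \<Sum>e\<in>{e\<in>E. w \<in> e}. \<phi> e)"
    proof (rule sum.cong[OF refl])
      fix w assume w: "w \<in> {w\<in>V. c w = \<alpha>}"
      have "m w \<ge> 1" using m1 w by simp
      then have "m w > 0" by linarith
      then show "m w *\<^sub>R f w = (\<Sum>e\<in>{e\<in>E. w \<in> e}. \<phi> e)"
        using w unfolding f_def psi_def by simp
    qed
    also have "\<dots> = sum \<phi> E" by (rule sum_swap) simp
    finally show ?thesis .
  qed
  have Mf: "M_sides V c m f u = mean \<phi>" if u: "u \<in> V" "c u = \<alpha>" for u
    unfolding M_sides_def Let_def mean_def using u sum_m sum_mf by simp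
  have Ag: "graph_A V adj m g (vx \<beta> e) = T e" if e: "e \<in> E" for e
  proof -
    define b where "b = vx \<beta> e"
    have bp: "b \<in> e" "c b = \<beta>" "b \<notin> \<tau>" "b \<in> V" using vx_props[OF e, of \<beta>] b_def by auto
    have U: "{u\<in>V. adj u b} = {u. adj u b}" using adj_V by blast
    have gu: "g u = psi \<phi> u - mean \<phi>" if "adj u b" for u
    proof -
      have "c u = \<alpha>" using adj_col_\<alpha> that bp by blast
      moreover have "u \<in> V" using adj_V that by blast
      ultimately show ?thesis unfolding g_def using Mf f_def by simp
    qed
    have mb: "m b = real (card {u. adj u b})" by (rule m_adj)
    have mbp: "m b > 0" using m1[OF bp(4)] by linarith
    have "graph_A V adj m g b = (1 / m b) *\<^sub>R (\<Sum>u\<in>{u. adj u b}. psi \<phi> u - mean \<phi>)"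
      unfolding graph_A_def U using gu by simp
    also have "\<dots> = (1 / m b) *\<^sub>R ((\<Sum>u\<in>{u. adj u b}. psi \<phi> u) - m b *\<^sub>R mean \<phi>)"
      by (simp add: sum_subtractf mb sum_constant_scaleR)
    also have "\<dots> = (1 / m b) *\<^sub>R (\<Sum>u\<in>{u. adj u b}. psi \<phi> u) - mean \<phi>"
      using mbp by (simp add: scaleR_diff_right)
    also have "\<dots> = T e" unfolding T_def P_ab[OF e, of \<phi>] P_I[OF e, of \<phi>] b_def ..
    finally show ?thesis unfolding b_def .
  qed
  have lhs: "(\<Sum>e\<in>E. (norm (T e))\<^sup>2) \<le> (wl2_norm V m (graph_A V adj m g))\<^sup>2"
  proof -
    have "(\<Sum>e\<in>E. (norm (T e))\<^sup>2) = (\<Sum>b\<in>{b\<in>V. c b = \<beta>}. \<Sum>e\<in>{e\<in>E. b \<in> e}. (norm (T e))\<^sup>2)"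
      by (rule sum_swap[symmetric]) simp
    also have "\<dots> = (\<Sum>b\<in>{b\<in>V. c b = \<beta>}. m b * (norm (graph_A V adj m g b))\<^sup>2)"
    proof (rule sum.cong[OF refl])
      fix b assume b: "b \<in> {b\<in>V. c b = \<beta>}"
      have "(\<Sum>e\<in>{e\<in>E. b \<in> e}. (norm (T e))\<^sup>2) = (\<Sum>e\<in>{e\<in>E. b \<in> e}. (norm (graph_A V adj m g b))\<^sup>2)"
      proof (rule sum.cong[OF refl])
        fix e assume e: "e \<in> {e\<in>E. b \<in> e}"
        then have "vx \<beta> e = b" using vx_eq[of e b \<beta>] E_F b by auto
        then show "(norm (T e))\<^sup>2 = (norm (graph_A V adj m g b))\<^sup>2" using Ag e by auto
      qed
      also have "\<dots> = m b * (norm (graph_A V adj m g b))\<^sup>2" using m_card b V_props by simp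
      finally show "(\<Sum>e\<in>{e\<in>E. b \<in> e}. (norm (T e))\<^sup>2) = m b * (norm (graph_A V adj m g b))\<^sup>2" .
    qed
    also have "\<dots> \<le> (\<Sum>v\<in>V. m v * (norm (graph_A V adj m g v))\<^sup>2)"
      by (rule sum_mono2[OF V_fin]) (auto simp: m0)
    also have "\<dots> = (wl2_norm V m (graph_A V adj m g))\<^sup>2" by (rule wl2_sq[symmetric]) (rule m0)
    finally show ?thesis .
  qed
  have rhs: "(wl2_norm V m f)\<^sup>2 \<le> (\<Sum>e\<in>E. (norm (\<phi> e))\<^sup>2)"
  proof -
    have "(wl2_norm V m f)\<^sup>2 = (\<Sum>v\<in>V. m v * (norm (f v))\<^sup>2)" by (rule wl2_sq) (rule m0)
    also have "\<dots> = (\<Sum>v\<in>V. if c v = \<alpha> then m v * (norm (psi \<phi> v))\<^sup>2 else 0)"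
      by (rule sum.cong[OF refl]) (simp add: f_def)
    also have "\<dots> = (\<Sum>v\<in>{v\<in>V. c v = \<alpha>}. m v * (norm (psi \<phi> v))\<^sup>2)"
      by (simp add: sum.inter_filter[OF V_fin])
    also have "\<dots> \<le> (\<Sum>v\<in>{v\<in>V. c v = \<alpha>}. \<Sum>e\<in>{e\<in>E. v \<in> e}. (norm (\<phi> e))\<^sup>2)"
    proof (rule sum_mono)
      fix v assume v: "v \<in> {v\<in>V. c v = \<alpha>}"
      define A where "A = {e\<in>E. v \<in> e}"
      have fA: "finite A" using E_fin A_def by simp
      have mv: "m v = real (card A)" unfolding A_def using m_card v V_props by simp
      have "m v \<ge> 1" using m1 v by simp
      then have mp: "m v > 0" by linarith
      have "norm (psi \<phi> v) \<le> (1 / m v) * (\<Sum>e\<in>A. norm (\<phi> e))"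
        unfolding psi_def A_def[symmetric] using mp norm_sum[of \<phi> A]
        by (simp add: divide_le_eq)
      then have "(norm (psi \<phi> v))\<^sup>2 \<le> ((1 / m v) * (\<Sum>e\<in>A. norm (\<phi> e)))\<^sup>2"
        by (intro power_mono) auto
      then have "m v * (norm (psi \<phi> v))\<^sup>2 \<le> m v * ((1 / m v) * (\<Sum>e\<in>A. norm (\<phi> e)))\<^sup>2"
        using mp by (intro mult_left_mono) auto
      also have "\<dots> = (\<Sum>e\<in>A. norm (\<phi> e))\<^sup>2 / m v"
        using mp by (simp add: power2_eq_square field_simps)
      also have "\<dots> \<le> (\<Sum>e\<in>A. (norm (\<phi> e))\<^sup>2)"
        using sum_squared_le_sum_of_squares[of "\<lambda>e. norm (\<phi> e)" A] mp mv
        by (simp add: divide_le_eq)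
      finally show "m v * (norm (psi \<phi> v))\<^sup>2 \<le> (\<Sum>e\<in>{e\<in>E. v \<in> e}. (norm (\<phi> e))\<^sup>2)"
        unfolding A_def .
    qed
    also have "\<dots> = (\<Sum>e\<in>E. (norm (\<phi> e))\<^sup>2)" by (rule sum_swap) simp
    finally show ?thesis .
  qed
  have w0: "wl2_norm V m (graph_A V adj m g) \<ge> 0" by (rule wl2_nonneg[OF m0])
  have "(wl2_norm V m (graph_A V adj m g))\<^sup>2 \<le> (lam * wl2_norm V m f)\<^sup>2"
    using bound w0 by (intro power_mono) auto
  also have "\<dots> = lam\<^sup>2 * (wl2_norm V m f)\<^sup>2" by (simp add: power_mult_distrib)
  also have "\<dots> \<le> lam\<^sup>2 * (\<Sum>e\<in>E. (norm (\<phi> e))\<^sup>2)"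
    using rhs by (intro mult_left_mono) auto
  finally show ?thesis using lhs unfolding T_def lam_def by linarith
qed

end

locale setting = cx n X c for n X c +
  fixes G :: "('g, 'b) monoid_scheme" and T :: "'g topology" and \<mu> :: "'g measure"
    and act :: "'g \<Rightarrow> 'a \<Rightarrow> 'a" and \<pi> :: "'g \<Rightarrow> ('e::banach \<Rightarrow>\<^sub>L 'e)" and D :: "nat \<Rightarrow> 'a set set"
  assumes grp: "unimodular_haar G T \<mu>"
    and actp: "type_preserving_action G X c act"
    and cocpt: "cocompact G X act"
    and stabs: "\<forall>\<tau>\<in>faces X (n - 2) \<union> faces X (n - 1) \<union> faces X n.
                  openin T (stab G act \<tau>) \<and> compactin T (stab G act \<tau>)"
    and rep: "strongly_continuous_rep G T \<pi>"
    and reps: "\<forall>k\<in>{n - 2, n - 1, n}. orbit_reps G act (faces X k) (D k)"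
    and nested: "\<forall>k1\<in>{n - 2, n - 1, n}. \<forall>k2\<in>{n - 2, n - 1, n}. k1 < k2 \<longrightarrow>
                   (\<forall>\<tau>\<in>D k1. \<exists>\<sigma>\<in>D k2. \<tau> \<subseteq> \<sigma>)"
begin

lemma tg: "topological_group G T" using grp unfolding unimodular_haar_def lc_group_def by blast
lemma G_group: "group G" using tg unfolding topological_group_def by blast

sublocale group G by (rule G_group)

lemma act_one: "v \<in> vertices X \<Longrightarrow> act \<one>\<^bsub>G\<^esub> v = v"
  using actp unfolding type_preserving_action_def by blast
lemma act_mult: "g \<in> carrier G \<Longrightarrow> h \<in> carrier G \<Longrightarrow> v \<in> vertices X \<Longrightarrow> act (g \<otimes>\<^bsub>G\<^esub> h) v = act g (act h v)"
  using actp unfolding type_preserving_action_def by blast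
lemma act_X: "g \<in> carrier G \<Longrightarrow> \<sigma> \<in> X \<Longrightarrow> act g ` \<sigma> \<in> X"
  using actp unfolding type_preserving_action_def by blast
lemma act_col: "g \<in> carrier G \<Longrightarrow> v \<in> vertices X \<Longrightarrow> c (act g v) = c v"
  using actp unfolding type_preserving_action_def by blast

lemma X_vert: "\<sigma> \<in> X \<Longrightarrow> \<sigma> \<subseteq> vertices X"
proof
  fix v assume "\<sigma> \<in> X" "v \<in> \<sigma>"
  then have "{v} \<in> X" using X_sub[of \<sigma> "{v}"] by blast
  then show "v \<in> vertices X" unfolding vertices_def by simp
qed

lemma act_vert: "g \<in> carrier G \<Longrightarrow> v \<in> vertices X \<Longrightarrow> act g v \<in> vertices X"
proof -
  assume g: "g \<in> carrier G" and v: "v \<in> vertices X"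
  then have "act g ` {v} \<in> X" using act_X[OF g] unfolding vertices_def by blast
  then show ?thesis unfolding vertices_def by simp
qed

lemma img_mult: "g \<in> carrier G \<Longrightarrow> h \<in> carrier G \<Longrightarrow> \<rho> \<subseteq> vertices X \<Longrightarrow>
   act (g \<otimes>\<^bsub>G\<^esub> h) ` \<rho> = act g ` (act h ` \<rho>)"
proof -
  assume a: "g \<in> carrier G" "h \<in> carrier G" "\<rho> \<subseteq> vertices X"
  have "act (g \<otimes>\<^bsub>G\<^esub> h) ` \<rho> = (\<lambda>v. act g (act h v)) ` \<rho>"
    by (rule image_cong[OF refl]) (use a act_mult in blast)
  then show ?thesis by (simp add: image_image)
qed

lemma img_one: "\<rho> \<subseteq> vertices X \<Longrightarrow> act \<one>\<^bsub>G\<^esub> ` \<rho> = \<rho>"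
proof -
  assume a: "\<rho> \<subseteq> vertices X"
  have "act \<one>\<^bsub>G\<^esub> ` \<rho> = (\<lambda>v. v) ` \<rho>"
    by (rule image_cong[OF refl]) (use a act_one in blast)
  then show ?thesis by simp
qed

lemma img_inv: "g \<in> carrier G \<Longrightarrow> \<rho> \<subseteq> vertices X \<Longrightarrow> act (inv\<^bsub>G\<^esub> g) ` (act g ` \<rho>) = \<rho>"
  by (metis img_mult img_one inv_closed l_inv)

lemma img_inv2: "g \<in> carrier G \<Longrightarrow> \<rho> \<subseteq> vertices X \<Longrightarrow> act g ` (act (inv\<^bsub>G\<^esub> g) ` \<rho>) = \<rho>"
  by (metis img_mult img_one inv_closed r_inv)

lemma act_inj: "g \<in> carrier G \<Longrightarrow> inj_on (act g) (vertices X)"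
proof (rule inj_onI)
  fix u v assume g: "g \<in> carrier G" and u: "u \<in> vertices X" and v: "v \<in> vertices X" and eq: "act g u = act g v"
  have "act (inv\<^bsub>G\<^esub> g) (act g u) = act (inv\<^bsub>G\<^esub> g) (act g v)" using eq by simp
  then show "u = v" using act_mult[of "inv\<^bsub>G\<^esub> g" g] g u v act_one by (metis inv_closed l_inv)
qed

lemma card_img: "g \<in> carrier G \<Longrightarrow> \<rho> \<subseteq> vertices X \<Longrightarrow> card (act g ` \<rho>) = card \<rho>"
  using act_inj card_image inj_on_subset by metis

lemma act_faces: "g \<in> carrier G \<Longrightarrow> \<sigma> \<in> faces X k \<Longrightarrow> act g ` \<sigma> \<in> faces X k"
  unfolding faces_def using act_X card_img X_vert by auto

lemma img_col: "g \<in> carrier G \<Longrightarrow> \<rho> \<subseteq> vertices X \<Longrightarrow> c ` (act g ` \<rho>) = c ` \<rho>"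
proof -
  assume a: "g \<in> carrier G" "\<rho> \<subseteq> vertices X"
  have "c ` (act g ` \<rho>) = (\<lambda>v. c (act g v)) ` \<rho>" by (simp add: image_image)
  also have "\<dots> = c ` \<rho>" by (rule image_cong[OF refl]) (use a act_col in blast)
  finally show ?thesis .
qed

lemma img_face: "g \<in> carrier G \<Longrightarrow> e \<subseteq> vertices X \<Longrightarrow> act g ` face e \<kappa> = face (act g ` e) \<kappa>"
  unfolding face_def using act_col by auto

lemma sim_act: "g \<in> carrier G \<Longrightarrow> sim_nu X c \<kappa> a b \<Longrightarrow> sim_nu X c \<kappa> (act g ` a) (act g ` b)"
proof -
  assume g: "g \<in> carrier G" and s: "sim_nu X c \<kappa> a b"
  then obtain \<tau> where t: "\<tau> \<in> X" "\<tau> \<subseteq> a \<inter> b" "c ` \<tau> = \<kappa>" unfolding sim_nu_def stype_def by blast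
  have "act g ` \<tau> \<in> X" using act_X[OF g t(1)] .
  moreover have "act g ` \<tau> \<subseteq> act g ` a \<inter> act g ` b" using t(2) by blast
  moreover have "c ` (act g ` \<tau>) = \<kappa>" using img_col[OF g X_vert[OF t(1)]] t(3) by simp
  ultimately show ?thesis unfolding sim_nu_def stype_def by blast
qed

lemma orbit_iff: "e \<in> orbit G act \<sigma> \<longleftrightarrow> (\<exists>g\<in>carrier G. e = act g ` \<sigma>)"
  unfolding orbit_def by blast

definition equiv :: "('a set \<Rightarrow> 'e) \<Rightarrow> bool" where
  "equiv \<psi> \<longleftrightarrow> (\<forall>g\<in>carrier G. \<forall>\<sigma>\<in>F. \<psi> (act g ` \<sigma>) = \<pi> g (\<psi> \<sigma>))"

lemma C_equiv: "\<phi> \<in> C_space G act n X \<pi> \<Longrightarrow> equiv \<phi>"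
  unfolding C_space_def equiv_def by blast

lemma equiv_diff: "equiv \<psi>1 \<Longrightarrow> equiv \<psi>2 \<Longrightarrow> equiv (\<lambda>\<sigma>. \<psi>1 \<sigma> - \<psi>2 \<sigma>)"
  unfolding equiv_def by (simp add: blinfun.diff_right)

lemma F_vert: "\<sigma> \<in> F \<Longrightarrow> \<sigma> \<subseteq> vertices X" using X_vert F_X by blast

lemma P_equiv:
  assumes eq: "equiv \<psi>"
  shows "equiv (P_op n X c \<kappa> \<psi>)"
  unfolding equiv_def
proof (intro ballI)
  fix g \<sigma> assume g: "g \<in> carrier G" and \<sigma>: "\<sigma> \<in> F"
  define S where "S = {\<sigma>'\<in>F. sim_nu X c \<kappa> \<sigma>' \<sigma>}"
  have g\<sigma>: "act g ` \<sigma> \<in> F" using act_faces[OF g \<sigma>] .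
  have Seq: "{\<sigma>'\<in>F. sim_nu X c \<kappa> \<sigma>' (act g ` \<sigma>)} = (\<lambda>\<sigma>'. act g ` \<sigma>') ` S"
  proof
    show "{\<sigma>'\<in>F. sim_nu X c \<kappa> \<sigma>' (act g ` \<sigma>)} \<subseteq> (\<lambda>\<sigma>'. act g ` \<sigma>') ` S"
    proof
      fix \<sigma>'' assume a: "\<sigma>'' \<in> {\<sigma>'\<in>F. sim_nu X c \<kappa> \<sigma>' (act g ` \<sigma>)}"
      define \<sigma>' where "\<sigma>' = act (inv\<^bsub>G\<^esub> g) ` \<sigma>''"
      have "\<sigma>' \<in> F" unfolding \<sigma>'_def using a act_faces[of "inv\<^bsub>G\<^esub> g"] g by auto
      moreover have "sim_nu X c \<kappa> \<sigma>' \<sigma>"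
        using sim_act[of "inv\<^bsub>G\<^esub> g" \<kappa> \<sigma>'' "act g ` \<sigma>"] a g img_inv[OF g F_vert[OF \<sigma>]]
        unfolding \<sigma>'_def by auto
      moreover have "\<sigma>'' = act g ` \<sigma>'" unfolding \<sigma>'_def using img_inv2[OF g] a F_vert by auto
      ultimately show "\<sigma>'' \<in> (\<lambda>\<sigma>'. act g ` \<sigma>') ` S" unfolding S_def by blast
    qed
    show "(\<lambda>\<sigma>'. act g ` \<sigma>') ` S \<subseteq> {\<sigma>'\<in>F. sim_nu X c \<kappa> \<sigma>' (act g ` \<sigma>)}"
      unfolding S_def using act_faces[OF g] sim_act[OF g] by auto
  qed
  have inj: "inj_on (\<lambda>\<sigma>'. act g ` \<sigma>') S"
  proof (rule inj_onI)
    fix a b assume "a \<in> S" "b \<in> S" "act g ` a = act g ` b"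
    then show "a = b" using img_inv[OF g] F_vert unfolding S_def by (metis (no_types, lifting) mem_Collect_eq)
  qed
  have "P_op n X c \<kappa> \<psi> (act g ` \<sigma>) = (1 / real (card S)) *\<^sub>R (\<Sum>\<sigma>'\<in>S. \<psi> (act g ` \<sigma>'))"
    unfolding P_op_def Let_def using g\<sigma> Seq inj by (simp add: card_image sum.reindex)
  also have "\<dots> = (1 / real (card S)) *\<^sub>R (\<Sum>\<sigma>'\<in>S. \<pi> g (\<psi> \<sigma>'))"
    using eq g unfolding equiv_def S_def by simp
  also have "\<dots> = \<pi> g (P_op n X c \<kappa> \<psi> \<sigma>)"
    unfolding P_op_def Let_def S_def using \<sigma> by (simp add: blinfun.scaleR_right blinfun.sum_right)
  finally show "P_op n X c \<kappa> \<psi> (act g ` \<sigma>) = \<pi> g (P_op n X c \<kappa> \<psi> \<sigma>)" .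
qed

section \<open>topology and measure\<close>

lemma topG: "topspace T = carrier G" using tg unfolding topological_group_def by blast
lemma mult_cont: "continuous_map (prod_topology T T) T (\<lambda>(x, y). x \<otimes>\<^bsub>G\<^esub> y)"
  using tg unfolding topological_group_def by blast

lemma haar: "haar_measure G T \<mu>" using grp unfolding unimodular_haar_def by blast

lemma sets_mu: "sets \<mu> = sigma_sets (topspace T) (Collect (openin T))"
  using haar unfolding haar_measure_def by blast

lemma open_sets: "openin T U \<Longrightarrow> U \<in> sets \<mu>"
  unfolding sets_mu by (rule sigma_sets.Basic) simp

lemma left_inv: "g \<in> carrier G \<Longrightarrow> A \<in> sets \<mu> \<Longrightarrow> emeasure \<mu> ((\<lambda>x. g \<otimes>\<^bsub>G\<^esub> x) ` A) = emeasure \<mu> A"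
  using haar unfolding haar_measure_def by blast
lemma right_inv: "g \<in> carrier G \<Longrightarrow> A \<in> sets \<mu> \<Longrightarrow> emeasure \<mu> ((\<lambda>x. x \<otimes>\<^bsub>G\<^esub> g) ` A) = emeasure \<mu> A"
  using grp unfolding unimodular_haar_def by blast
lemma compact_fin: "compactin T C \<Longrightarrow> emeasure \<mu> C < \<infinity>"
  using haar unfolding haar_measure_def by blast
lemma open_pos: "openin T U \<Longrightarrow> U \<noteq> {} \<Longrightarrow> emeasure \<mu> U > 0"
  using haar unfolding haar_measure_def by blast

lemma left_cont: "g \<in> carrier G \<Longrightarrow> continuous_map T T (\<lambda>x. g \<otimes>\<^bsub>G\<^esub> x)"
proof -
  assume g: "g \<in> carrier G"
  have "continuous_map T (prod_topology T T) (\<lambda>x. (g, x))"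
    by (rule continuous_map_pairedI) (simp_all add: topG g)
  from continuous_map_compose[OF this mult_cont] show ?thesis by (simp add: o_def)
qed

lemma right_cont: "g \<in> carrier G \<Longrightarrow> continuous_map T T (\<lambda>x. x \<otimes>\<^bsub>G\<^esub> g)"
proof -
  assume g: "g \<in> carrier G"
  have "continuous_map T (prod_topology T T) (\<lambda>x. (x, g))"
    by (rule continuous_map_pairedI) (simp_all add: topG g)
  from continuous_map_compose[OF this mult_cont] show ?thesis by (simp add: o_def)
qed

lemma lt_open: "g \<in> carrier G \<Longrightarrow> openin T U \<Longrightarrow> openin T ((\<lambda>x. g \<otimes>\<^bsub>G\<^esub> x) ` U)"
proof -
  assume g: "g \<in> carrier G" and U: "openin T U"
  have UG: "U \<subseteq> carrier G" using openin_subset[OF U] topG by simp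
  have "(\<lambda>x. g \<otimes>\<^bsub>G\<^esub> x) ` U = {x \<in> topspace T. inv\<^bsub>G\<^esub> g \<otimes>\<^bsub>G\<^esub> x \<in> U}"
  proof
    show "(\<lambda>x. g \<otimes>\<^bsub>G\<^esub> x) ` U \<subseteq> {x \<in> topspace T. inv\<^bsub>G\<^esub> g \<otimes>\<^bsub>G\<^esub> x \<in> U}"
      using UG g topG by (auto simp: m_assoc[symmetric])
    show "{x \<in> topspace T. inv\<^bsub>G\<^esub> g \<otimes>\<^bsub>G\<^esub> x \<in> U} \<subseteq> (\<lambda>x. g \<otimes>\<^bsub>G\<^esub> x) ` U"
    proof
      fix x assume x: "x \<in> {x \<in> topspace T. inv\<^bsub>G\<^esub> g \<otimes>\<^bsub>G\<^esub> x \<in> U}"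
      then have xG: "x \<in> carrier G" using topG by simp
      have "x = g \<otimes>\<^bsub>G\<^esub> (inv\<^bsub>G\<^esub> g \<otimes>\<^bsub>G\<^esub> x)" using xG g by (simp add: m_assoc[symmetric])
      then show "x \<in> (\<lambda>x. g \<otimes>\<^bsub>G\<^esub> x) ` U" using x by blast
    qed
  qed
  then show ?thesis using openin_continuous_map_preimage[OF left_cont[of "inv\<^bsub>G\<^esub> g"] U] g by simp
qed

lemma rt_open: "g \<in> carrier G \<Longrightarrow> openin T U \<Longrightarrow> openin T ((\<lambda>x. x \<otimes>\<^bsub>G\<^esub> g) ` U)"
proof -
  assume g: "g \<in> carrier G" and U: "openin T U"
  have UG: "U \<subseteq> carrier G" using openin_subset[OF U] topG by simp
  have "(\<lambda>x. x \<otimes>\<^bsub>G\<^esub> g) ` U = {x \<in> topspace T. x \<otimes>\<^bsub>G\<^esub> inv\<^bsub>G\<^esub> g \<in> U}"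
  proof
    show "(\<lambda>x. x \<otimes>\<^bsub>G\<^esub> g) ` U \<subseteq> {x \<in> topspace T. x \<otimes>\<^bsub>G\<^esub> inv\<^bsub>G\<^esub> g \<in> U}"
      using UG g topG by (auto simp: m_assoc)
    show "{x \<in> topspace T. x \<otimes>\<^bsub>G\<^esub> inv\<^bsub>G\<^esub> g \<in> U} \<subseteq> (\<lambda>x. x \<otimes>\<^bsub>G\<^esub> g) ` U"
    proof
      fix x assume x: "x \<in> {x \<in> topspace T. x \<otimes>\<^bsub>G\<^esub> inv\<^bsub>G\<^esub> g \<in> U}"
      then have xG: "x \<in> carrier G" using topG by simp
      have "x = (x \<otimes>\<^bsub>G\<^esub> inv\<^bsub>G\<^esub> g) \<otimes>\<^bsub>G\<^esub> g" using xG g by (simp add: m_assoc)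
      then show "x \<in> (\<lambda>x. x \<otimes>\<^bsub>G\<^esub> g) ` U" using x by blast
    qed
  qed
  then show ?thesis using openin_continuous_map_preimage[OF right_cont[of "inv\<^bsub>G\<^esub> g"] U] g by simp
qed

lemma cancel1 [simp]: "a \<in> carrier G \<Longrightarrow> b \<in> carrier G \<Longrightarrow> a \<otimes>\<^bsub>G\<^esub> (inv\<^bsub>G\<^esub> a \<otimes>\<^bsub>G\<^esub> b) = b"
  by (simp add: m_assoc[symmetric])
lemma cancel2 [simp]: "a \<in> carrier G \<Longrightarrow> b \<in> carrier G \<Longrightarrow> inv\<^bsub>G\<^esub> a \<otimes>\<^bsub>G\<^esub> (a \<otimes>\<^bsub>G\<^esub> b) = b"
  by (simp add: m_assoc[symmetric])

abbreviation "stb \<equiv> stab G act"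

lemma stab_carrier: "stb \<sigma> \<subseteq> carrier G" unfolding stab_def by blast

lemma one_stab: "\<sigma> \<in> X \<Longrightarrow> \<one>\<^bsub>G\<^esub> \<in> stb \<sigma>"
  unfolding stab_def using img_one X_vert by auto

definition "good \<sigma> \<longleftrightarrow> \<sigma> \<in> faces X (n - 2) \<or> \<sigma> \<in> faces X (n - 1) \<or> \<sigma> \<in> F"

lemma good_open: "good \<sigma> \<Longrightarrow> openin T (stb \<sigma>)" using stabs unfolding good_def by blast
lemma good_compact: "good \<sigma> \<Longrightarrow> compactin T (stb \<sigma>)" using stabs unfolding good_def by blast
lemma good_X: "good \<sigma> \<Longrightarrow> \<sigma> \<in> X" unfolding good_def faces_def by blast

lemma good_fin: "good \<sigma> \<Longrightarrow> emeasure \<mu> (stb \<sigma>) < \<infinity>" using compact_fin good_compact by blast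
lemma good_pos: "good \<sigma> \<Longrightarrow> emeasure \<mu> (stb \<sigma>) > 0"
  using open_pos good_open one_stab good_X by blast
lemma good_meas: "good \<sigma> \<Longrightarrow> emeasure \<mu> (stb \<sigma>) = ennreal (measure \<mu> (stb \<sigma>))"
  using good_fin emeasure_eq_ennreal_measure by (metis infinity_ennreal_def less_irrefl)
lemma good_wpos: "good \<sigma> \<Longrightarrow> measure \<mu> (stb \<sigma>) > 0"
  unfolding measure_def using good_fin good_pos enn2real_positive_iff by (metis infinity_ennreal_def)

lemma stab_sub:
  assumes e0: "e0 \<in> F" and h: "h \<in> stb e0"
  shows "h \<in> stb (face e0 \<kappa>)"
proof -
  have hG: "h \<in> carrier G" and he: "act h ` e0 = e0" using h unfolding stab_def by auto
  have "act h ` face e0 \<kappa> = face (act h ` e0) \<kappa>" by (rule img_face[OF hG F_vert[OF e0]])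
  then show ?thesis using hG he unfolding stab_def by simp
qed

lemma CI:
  assumes \<tau>0: "good \<tau>0" and e0: "e0 \<in> F" and sub: "\<tau>0 = face e0 \<kappa>"
    and finO: "finite ((\<lambda>h. act h ` e0) ` stb \<tau>0)"
  shows "emeasure \<mu> (stb \<tau>0) = of_nat (card ((\<lambda>h. act h ` e0) ` stb \<tau>0)) * emeasure \<mu> (stb e0)"
proof -
  define Orb where "Orb = (\<lambda>h. act h ` e0) ` stb \<tau>0"
  define C where "C e = {h \<in> stb \<tau>0. act h ` e0 = e}" for e
  define he where "he e = (SOME h. h \<in> stb \<tau>0 \<and> act h ` e0 = e)" for e
  have e0v: "e0 \<subseteq> vertices X" by (rule F_vert[OF e0])
  have \<tau>0v: "\<tau>0 \<subseteq> vertices X" using sub face_sub e0v by blast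
  have he: "he e \<in> stb \<tau>0 \<and> act (he e) ` e0 = e" if "e \<in> Orb" for e
  proof -
    have "\<exists>h. h \<in> stb \<tau>0 \<and> act h ` e0 = e" using that unfolding Orb_def by blast
    then show ?thesis unfolding he_def by (rule someI_ex)
  qed
  have ss: "stb e0 \<subseteq> stb \<tau>0" using stab_sub[OF e0] sub by blast
  have Ceq: "C e = (\<lambda>x. he e \<otimes>\<^bsub>G\<^esub> x) ` stb e0" if eO: "e \<in> Orb" for e
  proof
    have h1: "he e \<in> carrier G" "act (he e) ` \<tau>0 = \<tau>0" "act (he e) ` e0 = e"
      using he[OF eO] unfolding stab_def by auto
    show "C e \<subseteq> (\<lambda>x. he e \<otimes>\<^bsub>G\<^esub> x) ` stb e0"
    proof
      fix h assume h: "h \<in> C e"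
      then have hG: "h \<in> carrier G" and he0: "act h ` e0 = e" unfolding C_def stab_def by auto
      define x where "x = inv\<^bsub>G\<^esub> (he e) \<otimes>\<^bsub>G\<^esub> h"
      have xG: "x \<in> carrier G" unfolding x_def using hG h1 by simp
      have "act x ` e0 = act (inv\<^bsub>G\<^esub> (he e)) ` (act h ` e0)"
        unfolding x_def using img_mult hG h1 e0v by simp
      also have "\<dots> = act (inv\<^bsub>G\<^esub> (he e)) ` (act (he e) ` e0)" using he0 h1 by simp
      also have "\<dots> = e0" using img_inv[OF h1(1) e0v] by simp
      finally have "x \<in> stb e0" using xG unfolding stab_def by simp
      moreover have "h = he e \<otimes>\<^bsub>G\<^esub> x" unfolding x_def using hG h1 by simp
      ultimately show "h \<in> (\<lambda>x. he e \<otimes>\<^bsub>G\<^esub> x) ` stb e0" by blast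
    qed
    show "(\<lambda>x. he e \<otimes>\<^bsub>G\<^esub> x) ` stb e0 \<subseteq> C e"
    proof
      fix h assume "h \<in> (\<lambda>x. he e \<otimes>\<^bsub>G\<^esub> x) ` stb e0"
      then obtain x where x: "x \<in> stb e0" and hx: "h = he e \<otimes>\<^bsub>G\<^esub> x" by blast
      have xG: "x \<in> carrier G" "act x ` e0 = e0" using x unfolding stab_def by auto
      have xt: "act x ` \<tau>0 = \<tau>0" using ss x unfolding stab_def by auto
      have hG: "h \<in> carrier G" using hx xG h1 by simp
      have "act h ` e0 = e" using hx img_mult[OF h1(1) xG(1) e0v] xG h1 by simp
      moreover have "act h ` \<tau>0 = \<tau>0" using hx img_mult[OF h1(1) xG(1) \<tau>0v] xt h1 by simp
      ultimately show "h \<in> C e" unfolding C_def stab_def using hG by simp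
    qed
  qed
  have U: "stb \<tau>0 = (\<Union>e\<in>Orb. C e)" unfolding C_def Orb_def by blast
  have disj: "disjoint_family_on C Orb" unfolding disjoint_family_on_def C_def by blast
  have Cs: "C ` Orb \<subseteq> sets \<mu>"
  proof
    fix A assume "A \<in> C ` Orb"
    then obtain e where eO: "e \<in> Orb" and A: "A = C e" by blast
    have "he e \<in> carrier G" using he[OF eO] stab_carrier by blast
    moreover have "good e0" using e0 unfolding good_def by blast
    ultimately show "A \<in> sets \<mu>" unfolding A Ceq[OF eO] using open_sets lt_open good_open by blast
  qed
  have "emeasure \<mu> (stb \<tau>0) = (\<Sum>e\<in>Orb. emeasure \<mu> (C e))"
    unfolding U using sum_emeasure[OF Cs disj] finO Orb_def by simp
  also have "\<dots> = (\<Sum>e\<in>Orb. emeasure \<mu> (stb e0))"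
  proof (rule sum.cong[OF refl])
    fix e assume eO: "e \<in> Orb"
    have "he e \<in> carrier G" using he[OF eO] stab_carrier by blast
    moreover have "good e0" using e0 unfolding good_def by blast
    ultimately show "emeasure \<mu> (C e) = emeasure \<mu> (stb e0)"
      unfolding Ceq[OF eO] using left_inv open_sets good_open by blast
  qed
  also have "\<dots> = of_nat (card Orb) * emeasure \<mu> (stb e0)" by simp
  finally show ?thesis unfolding Orb_def .
qed

lemma conj_mult: "k \<in> carrier G \<Longrightarrow> h \<in> carrier G \<Longrightarrow>
   (k \<otimes>\<^bsub>G\<^esub> ((inv\<^bsub>G\<^esub> k \<otimes>\<^bsub>G\<^esub> h) \<otimes>\<^bsub>G\<^esub> k)) \<otimes>\<^bsub>G\<^esub> inv\<^bsub>G\<^esub> k = h"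
  by (simp add: m_assoc)

lemma stab_conj:
  assumes k: "k \<in> carrier G" and \<sigma>: "\<sigma> \<subseteq> vertices X"
  shows "stb (act k ` \<sigma>) = (\<lambda>x. x \<otimes>\<^bsub>G\<^esub> inv\<^bsub>G\<^esub> k) ` ((\<lambda>x. k \<otimes>\<^bsub>G\<^esub> x) ` stb \<sigma>)"
proof
  have k\<sigma>: "act k ` \<sigma> \<subseteq> vertices X" using \<sigma> act_vert k by blast
  show "stb (act k ` \<sigma>) \<subseteq> (\<lambda>x. x \<otimes>\<^bsub>G\<^esub> inv\<^bsub>G\<^esub> k) ` ((\<lambda>x. k \<otimes>\<^bsub>G\<^esub> x) ` stb \<sigma>)"
  proof
    fix h assume h: "h \<in> stb (act k ` \<sigma>)"
    then have hG: "h \<in> carrier G" and hk: "act h ` (act k ` \<sigma>) = act k ` \<sigma>" unfolding stab_def by auto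
    define x where "x = (inv\<^bsub>G\<^esub> k \<otimes>\<^bsub>G\<^esub> h) \<otimes>\<^bsub>G\<^esub> k"
    have xG: "x \<in> carrier G" unfolding x_def using hG k by simp
    have "act x ` \<sigma> = act (inv\<^bsub>G\<^esub> k) ` (act h ` (act k ` \<sigma>))"
      unfolding x_def using img_mult hG k \<sigma> k\<sigma> by simp
    also have "\<dots> = \<sigma>" using hk img_inv[OF k \<sigma>] by simp
    finally have "x \<in> stb \<sigma>" using xG unfolding stab_def by simp
    moreover have "h = (k \<otimes>\<^bsub>G\<^esub> x) \<otimes>\<^bsub>G\<^esub> inv\<^bsub>G\<^esub> k" unfolding x_def using conj_mult[OF k hG] by simp
    ultimately show "h \<in> (\<lambda>x. x \<otimes>\<^bsub>G\<^esub> inv\<^bsub>G\<^esub> k) ` ((\<lambda>x. k \<otimes>\<^bsub>G\<^esub> x) ` stb \<sigma>)" by blast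
  qed
  show "(\<lambda>x. x \<otimes>\<^bsub>G\<^esub> inv\<^bsub>G\<^esub> k) ` ((\<lambda>x. k \<otimes>\<^bsub>G\<^esub> x) ` stb \<sigma>) \<subseteq> stb (act k ` \<sigma>)"
  proof
    fix h assume "h \<in> (\<lambda>x. x \<otimes>\<^bsub>G\<^esub> inv\<^bsub>G\<^esub> k) ` ((\<lambda>x. k \<otimes>\<^bsub>G\<^esub> x) ` stb \<sigma>)"
    then obtain x where x: "x \<in> stb \<sigma>" and hx: "h = (k \<otimes>\<^bsub>G\<^esub> x) \<otimes>\<^bsub>G\<^esub> inv\<^bsub>G\<^esub> k" by blast
    have xG: "x \<in> carrier G" and xs: "act x ` \<sigma> = \<sigma>" using x unfolding stab_def by auto
    have hG: "h \<in> carrier G" using hx xG k by simp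
    have "act h ` (act k ` \<sigma>) = act k ` (act x ` (act (inv\<^bsub>G\<^esub> k) ` (act k ` \<sigma>)))"
      unfolding hx using img_mult k xG \<sigma> k\<sigma> act_vert by (simp add: image_subset_iff)
    also have "\<dots> = act k ` \<sigma>" using img_inv[OF k \<sigma>] xs by simp
    finally show "h \<in> stb (act k ` \<sigma>)" using hG unfolding stab_def by simp
  qed
qed

lemma conj_meas: "k \<in> carrier G \<Longrightarrow> \<sigma> \<in> F \<Longrightarrow> emeasure \<mu> (stb (act k ` \<sigma>)) = emeasure \<mu> (stb \<sigma>)"
proof -
  assume k: "k \<in> carrier G" and \<sigma>: "\<sigma> \<in> F"
  have g: "good \<sigma>" using \<sigma> unfolding good_def by blast
  have o1: "openin T ((\<lambda>x. k \<otimes>\<^bsub>G\<^esub> x) ` stb \<sigma>)" using lt_open[OF k good_open[OF g]] .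
  have "emeasure \<mu> (stb (act k ` \<sigma>)) = emeasure \<mu> ((\<lambda>x. k \<otimes>\<^bsub>G\<^esub> x) ` stb \<sigma>)"
    unfolding stab_conj[OF k F_vert[OF \<sigma>]] using right_inv[OF _ open_sets[OF o1]] k by simp
  also have "\<dots> = emeasure \<mu> (stb \<sigma>)" using left_inv[OF k open_sets[OF good_open[OF g]]] .
  finally show ?thesis .
qed

section \<open>finiteness of representatives and boundedness on K\<close>

lemma reps_k: "k \<in> {n - 2, n - 1, n} \<Longrightarrow> orbit_reps G act (faces X k) (D k)"
  using reps by blast

lemma reps_props: "k \<in> {n - 2, n - 1, n} \<Longrightarrow> D k \<subseteq> faces X k \<and>
     (\<forall>\<sigma>\<in>faces X k. \<exists>\<tau>\<in>D k. \<sigma> \<in> orbit G act \<tau>) \<and>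
     (\<forall>\<tau>\<in>D k. \<forall>\<tau>'\<in>D k. \<tau>' \<in> orbit G act \<tau> \<longrightarrow> \<tau>' = \<tau>)"
  using reps_k unfolding orbit_reps_def .

lemma D_sub: "k \<in> {n - 2, n - 1, n} \<Longrightarrow> D k \<subseteq> faces X k"
  by (drule reps_props) (erule conjunct1)

lemma D_cover: "k \<in> {n - 2, n - 1, n} \<Longrightarrow> \<sigma> \<in> faces X k \<Longrightarrow> \<exists>\<tau>\<in>D k. \<sigma> \<in> orbit G act \<tau>"
proof -
  assume a: "k \<in> {n - 2, n - 1, n}" "\<sigma> \<in> faces X k"
  have h: "\<forall>\<sigma>\<in>faces X k. \<exists>\<tau>\<in>D k. \<sigma> \<in> orbit G act \<tau>"
    using conjunct1[OF conjunct2[OF reps_props[OF a(1)]]] .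
  show ?thesis using bspec[OF h a(2)] .
qed

lemma D_uniq: "k \<in> {n - 2, n - 1, n} \<Longrightarrow> \<tau> \<in> D k \<Longrightarrow> \<tau>' \<in> D k \<Longrightarrow> \<tau>' \<in> orbit G act \<tau> \<Longrightarrow> \<tau>' = \<tau>"
proof -
  assume a: "k \<in> {n - 2, n - 1, n}" "\<tau> \<in> D k" "\<tau>' \<in> D k" "\<tau>' \<in> orbit G act \<tau>"
  have "\<forall>\<tau>\<in>D k. \<forall>\<tau>'\<in>D k. \<tau>' \<in> orbit G act \<tau> \<longrightarrow> \<tau>' = \<tau>" using conjunct2[OF conjunct2[OF reps_props[OF a(1)]]] .
  then show ?thesis using a by blast
qed

lemma self_orbit: "\<sigma> \<in> X \<Longrightarrow> \<sigma> \<in> orbit G act \<sigma>"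
  unfolding orbit_iff using img_one X_vert one_closed by metis

lemma D_fin: "k \<in> {n - 2, n - 1, n} \<Longrightarrow> finite (D k)"
proof -
  assume k: "k \<in> {n - 2, n - 1, n}"
  have inj: "inj_on (orbit G act) (D k)"
  proof (rule inj_onI)
    fix a b assume a: "a \<in> D k" and b: "b \<in> D k" and eq: "orbit G act a = orbit G act b"
    have "b \<in> X" using b D_sub[OF k] unfolding faces_def by blast
    then have "b \<in> orbit G act a" using self_orbit eq by simp
    then show "a = b" using D_uniq[OF k a b] by simp
  qed
  have "orbit G act ` D k \<subseteq> orbit G act ` X" using D_sub[OF k] unfolding faces_def by blast
  moreover have "finite (orbit G act ` X)" using cocpt unfolding cocompact_def .
  ultimately have "finite (orbit G act ` D k)" using finite_subset by blast
  then show ?thesis using finite_imageD inj by blast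
qed

lemma fin_union_bound:
  fixes f :: "'g \<Rightarrow> real"
  assumes "finite I" and "\<And>i. i \<in> I \<Longrightarrow> \<exists>B. \<forall>g\<in>S i. f g \<le> B"
  shows "\<exists>B. \<forall>g\<in>(\<Union>i\<in>I. S i). f g \<le> B"
  using assms
proof (induction I rule: finite_induct)
  case empty then show ?case by simp
next
  case (insert i I)
  then obtain B1 where B1: "\<forall>g\<in>(\<Union>i\<in>I. S i). f g \<le> B1" by blast
  obtain B2 where B2: "\<forall>g\<in>S i. f g \<le> B2" using insert by blast
  have "\<forall>g\<in>(\<Union>i\<in>insert i I. S i). f g \<le> max B1 B2" using B1 B2 by fastforce
  then show ?case by blast
qed

lemma rep_cont: "continuous_map T euclidean (\<lambda>g. blinfun_apply (\<pi> g) v)"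
  using rep unfolding strongly_continuous_rep_def by blast
lemma rep_mult: "g \<in> carrier G \<Longrightarrow> h \<in> carrier G \<Longrightarrow> \<pi> (g \<otimes>\<^bsub>G\<^esub> h) = \<pi> g o\<^sub>L \<pi> h"
  using rep unfolding strongly_continuous_rep_def by blast
lemma rep_one: "\<pi> \<one>\<^bsub>G\<^esub> = id_blinfun"
  using rep unfolding strongly_continuous_rep_def by blast

lemma stab_bound: "good \<rho> \<Longrightarrow> \<exists>B. \<forall>x\<in>stb \<rho>. norm (\<pi> x v) \<le> B"
proof -
  assume g: "good \<rho>"
  have "compactin euclidean ((\<lambda>x. blinfun_apply (\<pi> x) v) ` stb \<rho>)"
    by (rule image_compactin[OF good_compact[OF g] rep_cont])
  then have "bounded ((\<lambda>x. blinfun_apply (\<pi> x) v) ` stb \<rho>)" using compact_imp_bounded by simp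
  then show ?thesis unfolding bounded_iff by blast
qed

abbreviation "K \<equiv> K_set G act n (D n)"

lemma K_pointwise: "\<exists>B. \<forall>g\<in>K. norm (\<pi> g v) \<le> B"
proof -
  define I where "I = {(\<sigma>, \<sigma>', \<rho>, \<rho>'). \<sigma> \<in> D n \<and> \<sigma>' \<in> D n \<and> \<rho> \<subseteq> \<sigma> \<and> \<rho>' \<subseteq> \<sigma>' \<and> card \<rho> = n - 1}"
  define S :: "'a set \<times> 'a set \<times> 'a set \<times> 'a set \<Rightarrow> 'g set" where "S i = (case i of (\<sigma>, \<sigma>', \<rho>, \<rho>') \<Rightarrow> {g\<in>carrier G. act g ` \<rho> = \<rho>'})" for i
  have Dn: "finite (D n)" using D_fin by simp
  have DnF: "D n \<subseteq> F" using D_sub by simp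
  have "I \<subseteq> (\<lambda>(\<sigma>, \<sigma>', \<rho>, \<rho>'). (\<sigma>, \<sigma>', \<rho>, \<rho>')) ` (D n \<times> D n \<times> Pow (\<Union>(D n)) \<times> Pow (\<Union>(D n)))"
    unfolding I_def by auto
  moreover have "finite (\<Union>(D n))" using Dn DnF F_fin by blast
  ultimately have finI: "finite I" using Dn by (meson finite_Pow_iff finite_SigmaI finite_imageI finite_subset)
  have KS: "K \<subseteq> (\<Union>i\<in>I. S i)"
  proof
    fix g assume g: "g \<in> K"
    then obtain \<sigma> \<sigma>' where gG: "g \<in> carrier G" and s: "\<sigma> \<in> D n" "\<sigma>' \<in> D n"
      and cd: "card (act g ` \<sigma> \<inter> \<sigma>') \<ge> n - 1" unfolding K_set_def by blast
    obtain \<rho>' where r': "\<rho>' \<subseteq> act g ` \<sigma> \<inter> \<sigma>'" "card \<rho>' = n - 1" "finite \<rho>'"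
      using obtain_subset_with_card_n[OF cd] by metis
    have sv: "\<sigma> \<subseteq> vertices X" using s DnF F_vert by blast
    define \<rho> where "\<rho> = act (inv\<^bsub>G\<^esub> g) ` \<rho>'"
    have gsv: "act g ` \<sigma> \<subseteq> vertices X" using sv act_vert gG by blast
    have r'v: "\<rho>' \<subseteq> vertices X" using r' gsv by blast
    have "\<rho> \<subseteq> act (inv\<^bsub>G\<^esub> g) ` (act g ` \<sigma>)" unfolding \<rho>_def using r' by blast
    then have "\<rho> \<subseteq> \<sigma>" using img_inv[OF gG sv] by simp
    moreover have "card \<rho> = n - 1" unfolding \<rho>_def using card_img[of "inv\<^bsub>G\<^esub> g" \<rho>'] gG r'v r' by simp
    moreover have "act g ` \<rho> = \<rho>'" unfolding \<rho>_def using img_inv2[OF gG r'v] .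
    ultimately have "(\<sigma>, \<sigma>', \<rho>, \<rho>') \<in> I" "g \<in> S (\<sigma>, \<sigma>', \<rho>, \<rho>')"
      unfolding I_def S_def using s r' gG by auto
    then show "g \<in> (\<Union>i\<in>I. S i)" by blast
  qed
  have "\<exists>B. \<forall>g\<in>S i. norm (\<pi> g v) \<le> B" if i: "i \<in> I" for i
  proof -
    obtain \<sigma> \<sigma>' \<rho> \<rho>' where ieq: "i = (\<sigma>, \<sigma>', \<rho>, \<rho>')" by (cases i) auto
    have props: "\<sigma> \<in> D n" "\<rho> \<subseteq> \<sigma>" "card \<rho> = n - 1" using i ieq unfolding I_def by auto
    have \<sigma>F: "\<sigma> \<in> F" using props DnF by blast
    have \<rho>ne: "\<rho> \<noteq> {}" using props(3) n2 by auto
    have "\<rho> \<in> X" using X_sub[OF F_X[OF \<sigma>F] props(2) \<rho>ne] .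
    then have "\<rho> \<in> faces X (n - 2)" using props(3) n2 unfolding faces_def by simp
    then have g\<rho>: "good \<rho>" unfolding good_def by blast
    have \<rho>v: "\<rho> \<subseteq> vertices X" using props(2) F_vert[OF \<sigma>F] by blast
    show ?thesis
    proof (cases "S i = {}")
      case True then show ?thesis by simp
    next
      case False
      then obtain g0 where g0: "g0 \<in> carrier G" "act g0 ` \<rho> = \<rho>'" unfolding S_def ieq by auto
      obtain B where B: "\<forall>x\<in>stb \<rho>. norm (\<pi> x v) \<le> B" using stab_bound[OF g\<rho>] by blast
      have "norm (\<pi> g v) \<le> norm (\<pi> g0) * B" if g: "g \<in> S i" for g
      proof -
        have gG: "g \<in> carrier G" and gr: "act g ` \<rho> = \<rho>'" using g unfolding S_def ieq by auto
        define x where "x = inv\<^bsub>G\<^esub> g0 \<otimes>\<^bsub>G\<^esub> g"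
        have xG: "x \<in> carrier G" unfolding x_def using gG g0 by simp
        have "act x ` \<rho> = act (inv\<^bsub>G\<^esub> g0) ` (act g ` \<rho>)" unfolding x_def using img_mult gG g0 \<rho>v by simp
        also have "\<dots> = \<rho>" using gr g0 img_inv[OF g0(1) \<rho>v] by simp
        finally have xs: "x \<in> stb \<rho>" using xG unfolding stab_def by simp
        have "g = g0 \<otimes>\<^bsub>G\<^esub> x" unfolding x_def using gG g0 by simp
        then have "\<pi> g v = \<pi> g0 (\<pi> x v)" using rep_mult[OF g0(1) xG] by simp
        then have "norm (\<pi> g v) \<le> norm (\<pi> g0) * norm (\<pi> x v)" using norm_blinfun by metis
        also have "\<dots> \<le> norm (\<pi> g0) * B" using B xs by (intro mult_left_mono) auto
        finally show ?thesis .
      qed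
      then show ?thesis by blast
    qed
  qed
  from fin_union_bound[where f="\<lambda>g. norm (\<pi> g v)" and S=S, OF finI this]
  obtain B where "\<forall>g\<in>(\<Union>i\<in>I. S i). norm (\<pi> g v) \<le> B" by blast
  then have "\<forall>g\<in>K. norm (\<pi> g v) \<le> B" using KS by blast
  then show ?thesis by blast
qed

lemma K_bdd: "bdd_above ((\<lambda>g. (norm (\<pi> g))\<^sup>2) ` K)"
proof -
  obtain B where B: "\<forall>g\<in>K. norm (\<pi> g) \<le> B" using ubp[of K \<pi>] K_pointwise by blast
  have "\<forall>g\<in>K. (norm (\<pi> g))\<^sup>2 \<le> B\<^sup>2" using B by (auto intro: power_mono)
  then show ?thesis unfolding bdd_above_def by blast
qed

lemma K_le: "g \<in> K \<Longrightarrow> (norm (\<pi> g))\<^sup>2 \<le> (SUP g\<in>K. (norm (\<pi> g))\<^sup>2)"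
  by (rule cSUP_upper[OF _ K_bdd])

lemma K_memI: "g \<in> carrier G \<Longrightarrow> \<sigma> \<in> D n \<Longrightarrow> \<sigma>' \<in> D n \<Longrightarrow> \<rho> \<subseteq> act g ` \<sigma> \<inter> \<sigma>' \<Longrightarrow> card \<rho> \<ge> n - 1 \<Longrightarrow> g \<in> K"
proof -
  assume a: "g \<in> carrier G" "\<sigma> \<in> D n" "\<sigma>' \<in> D n" "\<rho> \<subseteq> act g ` \<sigma> \<inter> \<sigma>'" "card \<rho> \<ge> n - 1"
  have "finite \<sigma>'" using a(3) D_sub F_fin by auto
  then have "card \<rho> \<le> card (act g ` \<sigma> \<inter> \<sigma>')" using a(4) by (intro card_mono) auto
  then have "n - 1 \<le> card (act g ` \<sigma> \<inter> \<sigma>')" using a(5) by linarith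
  then show ?thesis unfolding K_set_def using a(1-3) by blast
qed

end


context setting begin

lemma orb_sym: "a \<subseteq> vertices X \<Longrightarrow> b \<in> orbit G act a \<Longrightarrow> a \<in> orbit G act b"
proof -
  assume a: "a \<subseteq> vertices X" and b: "b \<in> orbit G act a"
  then obtain g where g: "g \<in> carrier G" "b = act g ` a" unfolding orbit_iff by blast
  then have "a = act (inv\<^bsub>G\<^esub> g) ` b" using img_inv[OF g(1) a] by simp
  then show ?thesis unfolding orbit_iff using g(1) by blast
qed

lemma orb_trans: "a \<subseteq> vertices X \<Longrightarrow> b \<in> orbit G act a \<Longrightarrow> d \<in> orbit G act b \<Longrightarrow> d \<in> orbit G act a"
proof -
  assume a: "a \<subseteq> vertices X" and b: "b \<in> orbit G act a" and d: "d \<in> orbit G act b"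
  obtain g where g: "g \<in> carrier G" "b = act g ` a" using b unfolding orbit_iff by blast
  obtain h where h: "h \<in> carrier G" "d = act h ` b" using d unfolding orbit_iff by blast
  have "d = act (h \<otimes>\<^bsub>G\<^esub> g) ` a" using img_mult[OF h(1) g(1) a] g h by simp
  then show ?thesis unfolding orbit_iff using g h by blast
qed

lemma D_same: "k \<in> {n - 2, n - 1, n} \<Longrightarrow> a \<in> D k \<Longrightarrow> b \<in> D k \<Longrightarrow> x \<in> orbit G act a \<Longrightarrow> x \<in> orbit G act b \<Longrightarrow> a = b"
proof -
  assume k: "k \<in> {n - 2, n - 1, n}" and a: "a \<in> D k" and b: "b \<in> D k"
    and xa: "x \<in> orbit G act a" and xb: "x \<in> orbit G act b"
  have av: "a \<subseteq> vertices X" using a D_sub[OF k] X_vert unfolding faces_def by blast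
  have bv: "b \<subseteq> vertices X" using b D_sub[OF k] X_vert unfolding faces_def by blast
  obtain g where g: "g \<in> carrier G" "x = act g ` b" using xb unfolding orbit_iff by blast
  have xv: "x \<subseteq> vertices X" using g bv act_vert by blast
  have "b \<in> orbit G act x" using orb_sym[OF bv xb] .
  then have "b \<in> orbit G act a" using orb_trans[OF av xa] by blast
  then show ?thesis using D_uniq[OF k a b] by simp
qed

end

locale glob = setting n X c G T \<mu> act \<pi> D
  for n X c and G :: "('g, 'b) monoid_scheme" and T \<mu> act and \<pi> :: "'g \<Rightarrow> ('e::banach \<Rightarrow>\<^sub>L 'e)" and D +
  fixes \<alpha> \<beta> :: nat
  assumes \<alpha>n: "\<alpha> \<le> n" and \<beta>n: "\<beta> \<le> n" and \<alpha>\<beta>: "\<alpha> \<noteq> \<beta>"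
begin

abbreviation "I \<equiv> {0..n} - {\<alpha>, \<beta>}"

definition "D2 = {\<tau>\<in>D (n - 2). c ` \<tau> = I}"
definition "wt \<sigma> = measure \<mu> (stb \<sigma>)"
definition "Et \<tau>0 = {e\<in>F. \<tau>0 \<subseteq> e}"
definition "rr \<sigma> = (SOME \<tau>0. \<tau>0 \<in> D (n - 2) \<and> face \<sigma> I \<in> orbit G act \<tau>0)"
definition "repn e = (SOME \<sigma>. \<sigma> \<in> D n \<and> e \<in> orbit G act \<sigma>)"
definition "Orb \<sigma> \<tau>0 = {e\<in>Et \<tau>0. e \<in> orbit G act \<sigma>}"

lemma I_sub: "I \<subseteq> {0..n}" by blast
lemma I_card: "card I = n - 1"
proof -
  have "card I = card {0..n} - card {\<alpha>, \<beta>}" using \<alpha>n \<beta>n by (intro card_Diff_subset) auto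
  then show ?thesis using \<alpha>\<beta> by simp
qed
lemma I_ne: "I \<noteq> {}"
proof
  assume "I = {}"
  then have "card I = 0" by simp
  then show False using I_card n2 by simp
qed

lemma fI_face: "\<sigma> \<in> F \<Longrightarrow> face \<sigma> I \<in> faces X (n - 2) \<and> c ` face \<sigma> I = I"
proof -
  assume s: "\<sigma> \<in> F"
  have "face \<sigma> I \<in> X" using face_X[OF s I_sub I_ne] .
  moreover have "card (face \<sigma> I) = n - 1" using face_card[OF s I_sub] I_card by simp
  ultimately show ?thesis using face_img[OF s I_sub] n2 unfolding faces_def by simp
qed

lemma D2_D: "\<tau>0 \<in> D2 \<Longrightarrow> \<tau>0 \<in> D (n - 2)" unfolding D2_def by blast
lemma D2_faces: "\<tau>0 \<in> D2 \<Longrightarrow> \<tau>0 \<in> faces X (n - 2)" using D2_D D_sub by blast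
lemma D2_type: "\<tau>0 \<in> D2 \<Longrightarrow> c ` \<tau>0 = I" unfolding D2_def by blast
lemma D2_fin: "finite D2" unfolding D2_def using D_fin by simp
lemma Dn_fin: "finite (D n)" using D_fin by simp
lemma Dn_F: "D n \<subseteq> F" using D_sub by simp

lemma D2_loc: "\<tau>0 \<in> D2 \<Longrightarrow> loc n X c \<tau>0 \<alpha> \<beta>"
  unfolding loc_def loc_axioms_def by (intro conjI cx_axioms D2_faces D2_type \<alpha>n \<beta>n \<alpha>\<beta>)

lemma rr_props: "\<sigma> \<in> F \<Longrightarrow> rr \<sigma> \<in> D2 \<and> face \<sigma> I \<in> orbit G act (rr \<sigma>)"
proof -
  assume s: "\<sigma> \<in> F"
  have k: "n - 2 \<in> {n - 2, n - 1, n}" by simp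
  have "\<exists>\<tau>0. \<tau>0 \<in> D (n - 2) \<and> face \<sigma> I \<in> orbit G act \<tau>0"
    using D_cover[OF k conjunct1[OF fI_face[OF s]]] by blast
  then have r: "rr \<sigma> \<in> D (n - 2) \<and> face \<sigma> I \<in> orbit G act (rr \<sigma>)"
    unfolding rr_def by (rule someI_ex)
  then obtain g where g: "g \<in> carrier G" "face \<sigma> I = act g ` rr \<sigma>" unfolding orbit_iff by blast
  have rv: "rr \<sigma> \<subseteq> vertices X" using r D_sub[OF k] X_vert unfolding faces_def by blast
  have "c ` rr \<sigma> = c ` face \<sigma> I" using g img_col[OF g(1) rv] by simp
  then have "c ` rr \<sigma> = I" using fI_face[OF s] by simp
  then show ?thesis using r unfolding D2_def by blast
qed

lemma rr_unique: "\<sigma> \<in> F \<Longrightarrow> \<tau>0 \<in> D2 \<Longrightarrow> face \<sigma> I \<in> orbit G act \<tau>0 \<Longrightarrow> rr \<sigma> = \<tau>0"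
  using D_same[of "n - 2" "rr \<sigma>" \<tau>0 "face \<sigma> I"] rr_props D2_D by auto

lemma repn_props: "e \<in> F \<Longrightarrow> repn e \<in> D n \<and> e \<in> orbit G act (repn e)"
proof -
  assume e: "e \<in> F"
  have "\<exists>\<sigma>. \<sigma> \<in> D n \<and> e \<in> orbit G act \<sigma>" using D_cover[of n e] e by auto
  then show ?thesis unfolding repn_def by (rule someI_ex)
qed

lemma repn_unique: "e \<in> F \<Longrightarrow> \<sigma> \<in> D n \<Longrightarrow> e \<in> orbit G act \<sigma> \<Longrightarrow> repn e = \<sigma>"
  using D_same[of n "repn e" \<sigma> e] repn_props by auto

lemma Et_face: "\<tau>0 \<in> D2 \<Longrightarrow> e \<in> Et \<tau>0 \<Longrightarrow> face e I = \<tau>0"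
  using face_unique[of e \<tau>0 I] D2_type unfolding Et_def by auto

lemma Et_fin: "\<tau>0 \<in> D2 \<Longrightarrow> finite (Et \<tau>0)"
proof -
  assume t: "\<tau>0 \<in> D2"
  interpret L: loc n X c \<tau>0 \<alpha> \<beta> by (rule D2_loc[OF t])
  have "Et \<tau>0 = L.E" unfolding Et_def L.E_def ..
  then show ?thesis using L.E_fin by simp
qed

lemma Dn_good: "\<sigma> \<in> D n \<Longrightarrow> good \<sigma>" using Dn_F unfolding good_def by blast

lemma nested_n: "\<tau>0 \<in> D (n - 2) \<Longrightarrow> \<exists>\<sigma>0\<in>D n. \<tau>0 \<subseteq> \<sigma>0"
proof -
  assume t: "\<tau>0 \<in> D (n - 2)"
  have "n - 2 < n" using n2 by simp
  then show ?thesis using nested t by blast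
qed

lemma Orb_props:
  assumes s: "\<sigma> \<in> D n"
  shows "Orb \<sigma> (rr \<sigma>) \<noteq> {}" "finite (Orb \<sigma> (rr \<sigma>))"
    "wt (rr \<sigma>) = real (card (Orb \<sigma> (rr \<sigma>))) * wt \<sigma>"
    "\<And>e. e \<in> Orb \<sigma> (rr \<sigma>) \<Longrightarrow> \<exists>g\<in>carrier G. e = act g ` \<sigma> \<and> g \<in> K \<and> inv\<^bsub>G\<^esub> g \<in> K"
proof -
  define \<tau>0 where "\<tau>0 = rr \<sigma>"
  have \<sigma>F: "\<sigma> \<in> F" using s Dn_F by blast
  have \<sigma>v: "\<sigma> \<subseteq> vertices X" using F_vert[OF \<sigma>F] .
  have t: "\<tau>0 \<in> D2" and fo: "face \<sigma> I \<in> orbit G act \<tau>0" using rr_props[OF \<sigma>F] \<tau>0_def by auto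
  have tF: "\<tau>0 \<in> faces X (n - 2)" using D2_faces[OF t] .
  have tv: "\<tau>0 \<subseteq> vertices X" using tF X_vert unfolding faces_def by blast
  have tcard: "card \<tau>0 = n - 1" using tF n2 unfolding faces_def by simp
  obtain g0 where g0: "g0 \<in> carrier G" "face \<sigma> I = act g0 ` \<tau>0" using fo unfolding orbit_iff by blast
  define e0 where "e0 = act (inv\<^bsub>G\<^esub> g0) ` \<sigma>"
  have ig0: "inv\<^bsub>G\<^esub> g0 \<in> carrier G" using g0 by simp
  have e0F: "e0 \<in> F" unfolding e0_def using act_faces[OF ig0 \<sigma>F] .
  have te0: "\<tau>0 = face e0 I"
  proof -
    have "face e0 I = act (inv\<^bsub>G\<^esub> g0) ` face \<sigma> I" unfolding e0_def using img_face[OF ig0 \<sigma>v] by simp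
    also have "\<dots> = \<tau>0" using g0 img_inv[OF g0(1) tv] by simp
    finally show ?thesis by simp
  qed
  have e0orb: "e0 \<in> orbit G act \<sigma>" unfolding e0_def orbit_iff using ig0 by blast
  have e0O: "e0 \<in> Orb \<sigma> \<tau>0" unfolding Orb_def Et_def using e0F te0 face_sub e0orb by blast
  then show "Orb \<sigma> (rr \<sigma>) \<noteq> {}" unfolding \<tau>0_def by blast
  have finO: "finite (Orb \<sigma> \<tau>0)" using Et_fin[OF t] unfolding Orb_def by simp
  then show "finite (Orb \<sigma> (rr \<sigma>))" unfolding \<tau>0_def .
  obtain \<sigma>0 where \<sigma>0: "\<sigma>0 \<in> D n" "\<tau>0 \<subseteq> \<sigma>0" using nested_n D2_D[OF t] by blast
  show "\<exists>g\<in>carrier G. e = act g ` \<sigma> \<and> g \<in> K \<and> inv\<^bsub>G\<^esub> g \<in> K" if e: "e \<in> Orb \<sigma> (rr \<sigma>)" for e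
  proof -
    have eO: "e \<in> Et \<tau>0" "e \<in> orbit G act \<sigma>" using e unfolding Orb_def \<tau>0_def by auto
    obtain g where g: "g \<in> carrier G" "e = act g ` \<sigma>" using eO(2) unfolding orbit_iff by blast
    have te: "\<tau>0 \<subseteq> e" using eO(1) unfolding Et_def by blast
    have "g \<in> K" using K_memI[OF g(1) s \<sigma>0(1), of \<tau>0] te g \<sigma>0 tcard by auto
    moreover have "inv\<^bsub>G\<^esub> g \<in> K"
    proof (rule K_memI[of "inv\<^bsub>G\<^esub> g" \<sigma>0 \<sigma> "act (inv\<^bsub>G\<^esub> g) ` \<tau>0"])
      show "inv\<^bsub>G\<^esub> g \<in> carrier G" using g by simp
      show "\<sigma>0 \<in> D n" "\<sigma> \<in> D n" using \<sigma>0 s by auto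
      have "act (inv\<^bsub>G\<^esub> g) ` \<tau>0 \<subseteq> act (inv\<^bsub>G\<^esub> g) ` e" using te by blast
      also have "\<dots> = \<sigma>" using g img_inv[OF g(1) \<sigma>v] by simp
      finally show "act (inv\<^bsub>G\<^esub> g) ` \<tau>0 \<subseteq> act (inv\<^bsub>G\<^esub> g) ` \<sigma>0 \<inter> \<sigma>" using \<sigma>0 by blast
      show "n - 1 \<le> card (act (inv\<^bsub>G\<^esub> g) ` \<tau>0)" using card_img[of "inv\<^bsub>G\<^esub> g" \<tau>0] g tv tcard by simp
    qed
    ultimately show ?thesis using g by blast
  qed
  have Oeq: "(\<lambda>h. act h ` e0) ` stb \<tau>0 = Orb \<sigma> \<tau>0"
  proof
    show "(\<lambda>h. act h ` e0) ` stb \<tau>0 \<subseteq> Orb \<sigma> \<tau>0"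
    proof
      fix e assume "e \<in> (\<lambda>h. act h ` e0) ` stb \<tau>0"
      then obtain h where h: "h \<in> stb \<tau>0" "e = act h ` e0" by blast
      have hG: "h \<in> carrier G" and ht: "act h ` \<tau>0 = \<tau>0" using h unfolding stab_def by auto
      have "e \<in> F" using h act_faces[OF hG e0F] by simp
      moreover have "\<tau>0 \<subseteq> e" using h ht te0 face_sub by blast
      moreover have "e = act (h \<otimes>\<^bsub>G\<^esub> inv\<^bsub>G\<^esub> g0) ` \<sigma>" using h img_mult[OF hG ig0 \<sigma>v] unfolding e0_def by simp
      then have "e \<in> orbit G act \<sigma>" unfolding orbit_iff using hG ig0 by blast
      ultimately show "e \<in> Orb \<sigma> \<tau>0" unfolding Orb_def Et_def by blast
    qed
    show "Orb \<sigma> \<tau>0 \<subseteq> (\<lambda>h. act h ` e0) ` stb \<tau>0"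
    proof
      fix e assume e: "e \<in> Orb \<sigma> \<tau>0"
      then have eE: "e \<in> Et \<tau>0" and eo: "e \<in> orbit G act \<sigma>" unfolding Orb_def by auto
      obtain g where g: "g \<in> carrier G" "e = act g ` \<sigma>" using eo unfolding orbit_iff by blast
      define h where "h = g \<otimes>\<^bsub>G\<^esub> g0"
      have hG: "h \<in> carrier G" unfolding h_def using g g0 by simp
      have sv': "act (inv\<^bsub>G\<^esub> g0) ` \<sigma> \<subseteq> vertices X" using \<sigma>v act_vert ig0 by blast
      have "act h ` e0 = act g ` (act g0 ` (act (inv\<^bsub>G\<^esub> g0) ` \<sigma>))"
        unfolding h_def e0_def using img_mult[OF g(1) g0(1) sv'] .
      also have "\<dots> = e" using img_inv2[OF g0(1) \<sigma>v] g by simp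
      finally have he: "act h ` e0 = e" .
      have "act h ` \<tau>0 = face (act h ` e0) I" unfolding te0 using img_face[OF hG F_vert[OF e0F]] by simp
      also have "\<dots> = \<tau>0" using he Et_face[OF t eE] by simp
      finally have "h \<in> stb \<tau>0" using hG unfolding stab_def by simp
      then show "e \<in> (\<lambda>h. act h ` e0) ` stb \<tau>0" using he by blast
    qed
  qed
  have gt: "good \<tau>0" using tF unfolding good_def by blast
  have "emeasure \<mu> (stb \<tau>0) = of_nat (card (Orb \<sigma> \<tau>0)) * emeasure \<mu> (stb e0)"
    using CI[OF gt e0F te0] finO Oeq by simp
  also have "emeasure \<mu> (stb e0) = emeasure \<mu> (stb \<sigma>)" unfolding e0_def by (rule conj_meas[OF ig0 \<sigma>F])
  finally have "emeasure \<mu> (stb \<tau>0) = of_nat (card (Orb \<sigma> \<tau>0)) * emeasure \<mu> (stb \<sigma>)" .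
  then have "ennreal (wt \<tau>0) = ennreal (real (card (Orb \<sigma> \<tau>0)) * wt \<sigma>)"
    unfolding wt_def using good_meas[OF gt] good_meas[OF Dn_good[OF s]]
    by (simp add: ennreal_mult ennreal_of_nat_eq_real_of_nat)
  then show "wt (rr \<sigma>) = real (card (Orb \<sigma> (rr \<sigma>))) * wt \<sigma>"
    unfolding \<tau>0_def[symmetric] wt_def by (simp add: ennreal_inj)
qed

lemma repn_rr: "\<tau>0 \<in> D2 \<Longrightarrow> e \<in> Et \<tau>0 \<Longrightarrow> repn e \<in> D n \<and> rr (repn e) = \<tau>0"
proof -
  assume t: "\<tau>0 \<in> D2" and e: "e \<in> Et \<tau>0"
  have eF: "e \<in> F" using e unfolding Et_def by blast
  define \<sigma>' where "\<sigma>' = repn e"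
  have r: "\<sigma>' \<in> D n" "e \<in> orbit G act \<sigma>'" using repn_props[OF eF] \<sigma>'_def by auto
  have \<sigma>'F: "\<sigma>' \<in> F" using r Dn_F by blast
  obtain g where g: "g \<in> carrier G" "e = act g ` \<sigma>'" using r(2) unfolding orbit_iff by blast
  have "face \<sigma>' I = act (inv\<^bsub>G\<^esub> g) ` face e I"
    using img_face[of "inv\<^bsub>G\<^esub> g" e I] g img_inv[OF g(1) F_vert[OF \<sigma>'F]] F_vert[OF eF] by simp
  also have "\<dots> = act (inv\<^bsub>G\<^esub> g) ` \<tau>0" using Et_face[OF t e] by simp
  finally have "face \<sigma>' I \<in> orbit G act \<tau>0" unfolding orbit_iff using g by blast
  then have "rr \<sigma>' = \<tau>0" using rr_unique[OF \<sigma>'F t] by simp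
  then show ?thesis using r \<sigma>'_def by simp
qed

lemma Orb_eq: "\<tau>0 \<in> D2 \<Longrightarrow> \<sigma> \<in> D n \<Longrightarrow> {e\<in>Et \<tau>0. repn e = \<sigma>} = Orb \<sigma> \<tau>0"
proof -
  assume t: "\<tau>0 \<in> D2" and s: "\<sigma> \<in> D n"
  show ?thesis
  proof
    show "{e\<in>Et \<tau>0. repn e = \<sigma>} \<subseteq> Orb \<sigma> \<tau>0"
      unfolding Orb_def using repn_props unfolding Et_def by blast
    show "Orb \<sigma> \<tau>0 \<subseteq> {e\<in>Et \<tau>0. repn e = \<sigma>}"
      unfolding Orb_def using repn_unique s unfolding Et_def by blast
  qed
qed

lemma regroup1: "(\<Sum>\<sigma>\<in>D n. h \<sigma>) = (\<Sum>\<tau>0\<in>D2. \<Sum>\<sigma>\<in>{\<sigma>\<in>D n. rr \<sigma> = \<tau>0}. h \<sigma>)"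
proof -
  have "rr ` D n \<subseteq> D2" using rr_props Dn_F by blast
  from sum.group[OF Dn_fin D2_fin this, of h] show ?thesis by simp
qed

lemma regroup2: "\<tau>0 \<in> D2 \<Longrightarrow> (\<Sum>e\<in>Et \<tau>0. f e) = (\<Sum>\<sigma>\<in>{\<sigma>\<in>D n. rr \<sigma> = \<tau>0}. \<Sum>e\<in>Orb \<sigma> \<tau>0. f e)"
proof -
  assume t: "\<tau>0 \<in> D2"
  have sub: "repn ` Et \<tau>0 \<subseteq> {\<sigma>\<in>D n. rr \<sigma> = \<tau>0}" using repn_rr[OF t] by blast
  have fin: "finite {\<sigma>\<in>D n. rr \<sigma> = \<tau>0}" using Dn_fin by simp
  have "(\<Sum>e\<in>Et \<tau>0. f e) = (\<Sum>\<sigma>\<in>{\<sigma>\<in>D n. rr \<sigma> = \<tau>0}. \<Sum>e\<in>{e\<in>Et \<tau>0. repn e = \<sigma>}. f e)"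
    using sum.group[OF Et_fin[OF t] fin sub, of f] by simp
  also have "\<dots> = (\<Sum>\<sigma>\<in>{\<sigma>\<in>D n. rr \<sigma> = \<tau>0}. \<Sum>e\<in>Orb \<sigma> \<tau>0. f e)"
    by (rule sum.cong[OF refl]) (simp add: Orb_eq[OF t])
  finally show ?thesis .
qed

definition "SK = (SUP g\<in>K. (norm (\<pi> g))\<^sup>2)"
definition "LL = Max (link_lambda TYPE('e) n X c ` D2)"
definition "N2 \<psi> = (\<Sum>\<sigma>\<in>D n. (norm (\<psi> \<sigma>))\<^sup>2 / wt \<sigma>)"
definition "TT \<phi> \<sigma> = P_op n X c ({0..n} - {\<alpha>}) (P_op n X c ({0..n} - {\<beta>}) \<phi>) \<sigma> - P_op n X c I \<phi> \<sigma>"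

lemma SK_ge: "g \<in> K \<Longrightarrow> (norm (\<pi> g))\<^sup>2 \<le> SK" unfolding SK_def by (rule K_le)

lemma Dn_ne: "D n \<noteq> {}"
proof -
  obtain \<sigma> where "\<sigma> \<in> F" using F_ne by blast
  then show ?thesis using D_cover[of n \<sigma>] by auto
qed

lemma SK_nonneg: "SK \<ge> 0"
proof -
  obtain \<sigma> where s: "\<sigma> \<in> D n" using Dn_ne by blast
  have sF: "\<sigma> \<in> F" using s Dn_F by blast
  have "\<one>\<^bsub>G\<^esub> \<in> K"
  proof (rule K_memI[of "\<one>\<^bsub>G\<^esub>" \<sigma> \<sigma> \<sigma>])
    show "\<one>\<^bsub>G\<^esub> \<in> carrier G" by simp
    show "\<sigma> \<in> D n" "\<sigma> \<in> D n" using s by auto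
    show "\<sigma> \<subseteq> act \<one>\<^bsub>G\<^esub> ` \<sigma> \<inter> \<sigma>" using img_one[OF F_vert[OF sF]] by simp
    show "n - 1 \<le> card \<sigma>" using F_card[OF sF] by simp
  qed
  then have "(norm (\<pi> \<one>\<^bsub>G\<^esub>))\<^sup>2 \<le> SK" by (rule SK_ge)
  then show ?thesis by (meson order.trans zero_le_power2)
qed

lemma lam_nonneg: "\<tau>0 \<in> D2 \<Longrightarrow> link_lambda TYPE('e) n X c \<tau>0 \<ge> 0"
proof -
  assume t: "\<tau>0 \<in> D2"
  interpret L: loc n X c \<tau>0 \<alpha> \<beta> by (rule D2_loc[OF t])
  show ?thesis unfolding link_lambda_def L.V_def[symmetric] L.m_def[symmetric]
    by (rule bl_nonneg[OF L.V_fin L.m1])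
qed

lemma LL_ge: "\<tau>0 \<in> D2 \<Longrightarrow> link_lambda TYPE('e) n X c \<tau>0 \<le> LL"
  unfolding LL_def using D2_fin by (intro Max_ge) auto

lemma D2_ne: "D2 \<noteq> {}"
proof -
  obtain \<sigma> where s: "\<sigma> \<in> D n" using Dn_ne by blast
  then show ?thesis using rr_props Dn_F by blast
qed

lemma LL_nonneg: "LL \<ge> 0"
proof -
  obtain \<tau>0 where "\<tau>0 \<in> D2" using D2_ne by blast
  then show ?thesis using lam_nonneg LL_ge order.trans by blast
qed

lemma wt_Dn: "\<sigma> \<in> D n \<Longrightarrow> wt \<sigma> > 0" unfolding wt_def using good_wpos Dn_good by blast
lemma wt_D2: "\<tau>0 \<in> D2 \<Longrightarrow> wt \<tau>0 > 0" unfolding wt_def using good_wpos D2_faces unfolding good_def by blast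

lemma Orb_Et: "e \<in> Orb \<sigma> \<tau>0 \<Longrightarrow> e \<in> F" unfolding Orb_def Et_def by blast

lemma P1:
  assumes eq: "equiv \<psi>" and s: "\<sigma> \<in> D n"
  shows "(norm (\<psi> \<sigma>))\<^sup>2 / wt \<sigma> \<le> SK * (\<Sum>e\<in>Orb \<sigma> (rr \<sigma>). (norm (\<psi> e))\<^sup>2) / wt (rr \<sigma>)"
proof -
  define Ob where "Ob = Orb \<sigma> (rr \<sigma>)"
  have sF: "\<sigma> \<in> F" using s Dn_F by blast
  have each: "(norm (\<psi> \<sigma>))\<^sup>2 \<le> SK * (norm (\<psi> e))\<^sup>2" if e: "e \<in> Ob" for e
  proof -
    obtain g where g: "g \<in> carrier G" "e = act g ` \<sigma>" "inv\<^bsub>G\<^esub> g \<in> K"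
      using Orb_props(4)[OF s] e unfolding Ob_def by blast
    have eF: "e \<in> F" using e Orb_Et unfolding Ob_def by blast
    have "\<sigma> = act (inv\<^bsub>G\<^esub> g) ` e" using g img_inv[OF g(1) F_vert[OF sF]] by simp
    then have "\<psi> \<sigma> = \<pi> (inv\<^bsub>G\<^esub> g) (\<psi> e)" using eq eF g(1) unfolding equiv_def by (metis inv_closed)
    then have "norm (\<psi> \<sigma>) \<le> norm (\<pi> (inv\<^bsub>G\<^esub> g)) * norm (\<psi> e)" using norm_blinfun by metis
    then have "(norm (\<psi> \<sigma>))\<^sup>2 \<le> (norm (\<pi> (inv\<^bsub>G\<^esub> g)) * norm (\<psi> e))\<^sup>2" by (intro power_mono) auto
    also have "\<dots> = (norm (\<pi> (inv\<^bsub>G\<^esub> g)))\<^sup>2 * (norm (\<psi> e))\<^sup>2" by (simp add: power_mult_distrib)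
    also have "\<dots> \<le> SK * (norm (\<psi> e))\<^sup>2" using SK_ge[OF g(3)] by (intro mult_right_mono) auto
    finally show ?thesis .
  qed
  have "real (card Ob) * (norm (\<psi> \<sigma>))\<^sup>2 = (\<Sum>e\<in>Ob. (norm (\<psi> \<sigma>))\<^sup>2)" by simp
  also have "\<dots> \<le> (\<Sum>e\<in>Ob. SK * (norm (\<psi> e))\<^sup>2)" using each by (intro sum_mono) auto
  also have "\<dots> = SK * (\<Sum>e\<in>Ob. (norm (\<psi> e))\<^sup>2)" by (simp add: sum_distrib_left)
  finally have cs: "real (card Ob) * (norm (\<psi> \<sigma>))\<^sup>2 \<le> SK * (\<Sum>e\<in>Ob. (norm (\<psi> e))\<^sup>2)" .
  have w: "wt (rr \<sigma>) = real (card Ob) * wt \<sigma>" using Orb_props(3)[OF s] unfolding Ob_def .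
  have wp: "wt \<sigma> > 0" using wt_Dn[OF s] .
  have cp: "card Ob > 0" using Orb_props(1,2)[OF s] unfolding Ob_def by (simp add: card_gt_0_iff)
  have "(norm (\<psi> \<sigma>))\<^sup>2 / wt \<sigma> = real (card Ob) * (norm (\<psi> \<sigma>))\<^sup>2 / wt (rr \<sigma>)"
    unfolding w using cp wp by simp
  also have "\<dots> \<le> SK * (\<Sum>e\<in>Ob. (norm (\<psi> e))\<^sup>2) / wt (rr \<sigma>)"
    using cs w cp wp by (intro divide_right_mono) auto
  finally show ?thesis unfolding Ob_def .
qed

lemma P2:
  assumes eq: "equiv \<psi>" and s: "\<sigma> \<in> D n"
  shows "(\<Sum>e\<in>Orb \<sigma> (rr \<sigma>). (norm (\<psi> e))\<^sup>2) / wt (rr \<sigma>) \<le> SK * ((norm (\<psi> \<sigma>))\<^sup>2 / wt \<sigma>)"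
proof -
  define Ob where "Ob = Orb \<sigma> (rr \<sigma>)"
  have sF: "\<sigma> \<in> F" using s Dn_F by blast
  have each: "(norm (\<psi> e))\<^sup>2 \<le> SK * (norm (\<psi> \<sigma>))\<^sup>2" if e: "e \<in> Ob" for e
  proof -
    obtain g where g: "g \<in> carrier G" "e = act g ` \<sigma>" "g \<in> K"
      using Orb_props(4)[OF s] e unfolding Ob_def by blast
    have "\<psi> e = \<pi> g (\<psi> \<sigma>)" using eq sF g unfolding equiv_def by blast
    then have "norm (\<psi> e) \<le> norm (\<pi> g) * norm (\<psi> \<sigma>)" using norm_blinfun by metis
    then have "(norm (\<psi> e))\<^sup>2 \<le> (norm (\<pi> g) * norm (\<psi> \<sigma>))\<^sup>2" by (intro power_mono) auto
    also have "\<dots> = (norm (\<pi> g))\<^sup>2 * (norm (\<psi> \<sigma>))\<^sup>2" by (simp add: power_mult_distrib)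
    also have "\<dots> \<le> SK * (norm (\<psi> \<sigma>))\<^sup>2" using SK_ge[OF g(3)] by (intro mult_right_mono) auto
    finally show ?thesis .
  qed
  have "(\<Sum>e\<in>Ob. (norm (\<psi> e))\<^sup>2) \<le> (\<Sum>e\<in>Ob. SK * (norm (\<psi> \<sigma>))\<^sup>2)" using each by (intro sum_mono) auto
  also have "\<dots> = real (card Ob) * (SK * (norm (\<psi> \<sigma>))\<^sup>2)" by simp
  finally have cs: "(\<Sum>e\<in>Ob. (norm (\<psi> e))\<^sup>2) \<le> real (card Ob) * (SK * (norm (\<psi> \<sigma>))\<^sup>2)" .
  have w: "wt (rr \<sigma>) = real (card Ob) * wt \<sigma>" using Orb_props(3)[OF s] unfolding Ob_def .
  have wp: "wt \<sigma> > 0" using wt_Dn[OF s] .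
  have cp: "card Ob > 0" using Orb_props(1,2)[OF s] unfolding Ob_def by (simp add: card_gt_0_iff)
  have "(\<Sum>e\<in>Ob. (norm (\<psi> e))\<^sup>2) / wt (rr \<sigma>) \<le> real (card Ob) * (SK * (norm (\<psi> \<sigma>))\<^sup>2) / wt (rr \<sigma>)"
    using cs w cp wp by (intro divide_right_mono) auto
  also have "\<dots> = SK * ((norm (\<psi> \<sigma>))\<^sup>2 / wt \<sigma>)" unfolding w using cp wp by simp
  finally show ?thesis unfolding Ob_def .
qed

lemma TT_equiv: "equiv \<phi> \<Longrightarrow> equiv (TT \<phi>)"
proof -
  assume e: "equiv \<phi>"
  have "equiv (\<lambda>\<sigma>. P_op n X c ({0..n} - {\<alpha>}) (P_op n X c ({0..n} - {\<beta>}) \<phi>) \<sigma> - P_op n X c I \<phi> \<sigma>)"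
    by (intro equiv_diff P_equiv e)
  then show ?thesis unfolding TT_def[abs_def] .
qed

lemma local_D2:
  fixes \<phi> :: "'a set \<Rightarrow> 'e"
  shows "\<tau>0 \<in> D2 \<Longrightarrow> (\<Sum>e\<in>Et \<tau>0. (norm (TT \<phi> e))\<^sup>2) \<le> LL\<^sup>2 * (\<Sum>e\<in>Et \<tau>0. (norm (\<phi> e))\<^sup>2)"
proof -
  assume t: "\<tau>0 \<in> D2"
  interpret L: loc n X c \<tau>0 \<alpha> \<beta> by (rule D2_loc[OF t])
  have EE: "Et \<tau>0 = L.E" unfolding Et_def L.E_def ..
  have "(\<Sum>e\<in>Et \<tau>0. (norm (TT \<phi> e))\<^sup>2) \<le> (link_lambda TYPE('e) n X c \<tau>0)\<^sup>2 * (\<Sum>e\<in>Et \<tau>0. (norm (\<phi> e))\<^sup>2)"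
    unfolding EE TT_def using L.local_bound[of \<phi>] by simp
  also have "\<dots> \<le> LL\<^sup>2 * (\<Sum>e\<in>Et \<tau>0. (norm (\<phi> e))\<^sup>2)"
  proof (rule mult_right_mono)
    show "(link_lambda TYPE('e) n X c \<tau>0)\<^sup>2 \<le> LL\<^sup>2" using lam_nonneg[OF t] LL_ge[OF t] by (intro power_mono) auto
    show "0 \<le> (\<Sum>e\<in>Et \<tau>0. (norm (\<phi> e))\<^sup>2)" by (intro sum_nonneg) auto
  qed
  finally show ?thesis .
qed

lemma main_sq:
  assumes C: "\<phi> \<in> C_space G act n X \<pi>"
  shows "N2 (TT \<phi>) \<le> SK\<^sup>2 * LL\<^sup>2 * N2 \<phi>"
proof -
  have e\<phi>: "equiv \<phi>" by (rule C_equiv[OF C])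
  have eT: "equiv (TT \<phi>)" by (rule TT_equiv[OF e\<phi>])
  define A where "A \<tau>0 = (\<Sum>\<sigma>\<in>{\<sigma>\<in>D n. rr \<sigma> = \<tau>0}. (norm (TT \<phi> \<sigma>))\<^sup>2 / wt \<sigma>)" for \<tau>0
  define B where "B \<tau>0 = (\<Sum>e\<in>Et \<tau>0. (norm (TT \<phi> e))\<^sup>2)" for \<tau>0
  define Cc where "Cc \<tau>0 = (\<Sum>e\<in>Et \<tau>0. (norm (\<phi> e))\<^sup>2)" for \<tau>0
  define Dd where "Dd \<tau>0 = (\<Sum>\<sigma>\<in>{\<sigma>\<in>D n. rr \<sigma> = \<tau>0}. (norm (\<phi> \<sigma>))\<^sup>2 / wt \<sigma>)" for \<tau>0
  have step: "A \<tau>0 \<le> SK\<^sup>2 * LL\<^sup>2 * Dd \<tau>0" if t: "\<tau>0 \<in> D2" for \<tau>0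
  proof -
    have wp: "wt \<tau>0 > 0" using wt_D2[OF t] .
    have "A \<tau>0 \<le> (\<Sum>\<sigma>\<in>{\<sigma>\<in>D n. rr \<sigma> = \<tau>0}. SK * (\<Sum>e\<in>Orb \<sigma> \<tau>0. (norm (TT \<phi> e))\<^sup>2) / wt \<tau>0)"
      unfolding A_def by (rule sum_mono) (use P1[OF eT] in auto)
    also have "\<dots> = (\<Sum>\<sigma>\<in>{\<sigma>\<in>D n. rr \<sigma> = \<tau>0}. SK / wt \<tau>0 * (\<Sum>e\<in>Orb \<sigma> \<tau>0. (norm (TT \<phi> e))\<^sup>2))"
      by (rule sum.cong[OF refl]) simp
    also have "\<dots> = SK / wt \<tau>0 * (\<Sum>\<sigma>\<in>{\<sigma>\<in>D n. rr \<sigma> = \<tau>0}. \<Sum>e\<in>Orb \<sigma> \<tau>0. (norm (TT \<phi> e))\<^sup>2)"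
      by (rule sum_distrib_left[symmetric])
    also have "\<dots> = SK / wt \<tau>0 * B \<tau>0" unfolding B_def using regroup2[OF t, of "\<lambda>e. (norm (TT \<phi> e))\<^sup>2"] by simp
    also have "\<dots> \<le> SK / wt \<tau>0 * (LL\<^sup>2 * Cc \<tau>0)"
      unfolding B_def Cc_def using local_D2[OF t] SK_nonneg wp by (intro mult_left_mono) auto
    also have "\<dots> = SK * LL\<^sup>2 * (Cc \<tau>0 / wt \<tau>0)" by simp
    finally have h1: "A \<tau>0 \<le> SK * LL\<^sup>2 * (Cc \<tau>0 / wt \<tau>0)" .
    have "Cc \<tau>0 / wt \<tau>0 = (\<Sum>\<sigma>\<in>{\<sigma>\<in>D n. rr \<sigma> = \<tau>0}. (\<Sum>e\<in>Orb \<sigma> \<tau>0. (norm (\<phi> e))\<^sup>2) / wt \<tau>0)"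
      unfolding Cc_def using regroup2[OF t, of "\<lambda>e. (norm (\<phi> e))\<^sup>2"] by (simp add: sum_divide_distrib)
    also have "\<dots> \<le> (\<Sum>\<sigma>\<in>{\<sigma>\<in>D n. rr \<sigma> = \<tau>0}. SK * ((norm (\<phi> \<sigma>))\<^sup>2 / wt \<sigma>))"
      by (rule sum_mono) (use P2[OF e\<phi>] in auto)
    also have "\<dots> = SK * Dd \<tau>0" unfolding Dd_def by (simp add: sum_distrib_left)
    finally have h2: "Cc \<tau>0 / wt \<tau>0 \<le> SK * Dd \<tau>0" .
    have "SK * LL\<^sup>2 \<ge> 0" using SK_nonneg by simp
    then have "SK * LL\<^sup>2 * (Cc \<tau>0 / wt \<tau>0) \<le> SK * LL\<^sup>2 * (SK * Dd \<tau>0)" by (rule mult_left_mono[OF h2])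
    also have "\<dots> = SK\<^sup>2 * LL\<^sup>2 * Dd \<tau>0" by (simp add: power2_eq_square)
    finally show ?thesis using h1 by linarith
  qed
  have "N2 (TT \<phi>) = (\<Sum>\<tau>0\<in>D2. A \<tau>0)" unfolding N2_def A_def by (rule regroup1)
  also have "\<dots> \<le> (\<Sum>\<tau>0\<in>D2. SK\<^sup>2 * LL\<^sup>2 * Dd \<tau>0)" by (rule sum_mono) (rule step)
  also have "\<dots> = SK\<^sup>2 * LL\<^sup>2 * (\<Sum>\<tau>0\<in>D2. Dd \<tau>0)" by (simp add: sum_distrib_left)
  also have "(\<Sum>\<tau>0\<in>D2. Dd \<tau>0) = N2 \<phi>" unfolding N2_def Dd_def by (rule regroup1[symmetric])
  finally show ?thesis .
qed

lemma N2_nonneg: "N2 \<psi> \<ge> 0" unfolding N2_def using wt_Dn by (intro sum_nonneg) (simp add: less_imp_le)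

lemma Cn_eq: "C_norm G act \<mu> (D n) \<psi> = sqrt (N2 \<psi>)" unfolding C_norm_def N2_def wt_def ..

lemma main_norm: "\<phi> \<in> C_space G act n X \<pi> \<Longrightarrow>
   C_norm G act \<mu> (D n) (TT \<phi>) \<le> SK * LL * C_norm G act \<mu> (D n) \<phi>"
proof -
  assume C: "\<phi> \<in> C_space G act n X \<pi>"
  have "sqrt (N2 (TT \<phi>)) \<le> sqrt (SK\<^sup>2 * LL\<^sup>2 * N2 \<phi>)" using main_sq[OF C] by (rule real_sqrt_le_mono)
  also have "\<dots> = SK * LL * sqrt (N2 \<phi>)" using SK_nonneg LL_nonneg by (simp add: real_sqrt_mult)
  finally show ?thesis unfolding Cn_eq .
qed

lemma zero_C: "(\<lambda>_. 0) \<in> C_space G act n X \<pi>" unfolding C_space_def by simp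

lemma op_bound: "op_norm_on (C_space G act n X \<pi>) (C_norm G act \<mu> (D n)) TT \<le> SK * LL"
  unfolding op_norm_on_def
proof (rule cSup_least)
  show "(\<lambda>\<phi>. C_norm G act \<mu> (D n) (TT \<phi>)) ` {\<phi> \<in> C_space G act n X \<pi>. C_norm G act \<mu> (D n) \<phi> \<le> 1} \<noteq> {}"
    using zero_C by (auto simp: C_norm_def)
  fix y assume "y \<in> (\<lambda>\<phi>. C_norm G act \<mu> (D n) (TT \<phi>)) ` {\<phi> \<in> C_space G act n X \<pi>. C_norm G act \<mu> (D n) \<phi> \<le> 1}"
  then obtain \<phi> where \<phi>: "\<phi> \<in> C_space G act n X \<pi>" "C_norm G act \<mu> (D n) \<phi> \<le> 1" and y: "y = C_norm G act \<mu> (D n) (TT \<phi>)" by blast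
  have "y \<le> SK * LL * C_norm G act \<mu> (D n) \<phi>" using main_norm[OF \<phi>(1)] y by simp
  also have "\<dots> \<le> SK * LL * 1" using \<phi>(2) SK_nonneg LL_nonneg by (intro mult_left_mono) auto
  finally show "y \<le> SK * LL" by simp
qed

end

lemma diff_single:
  assumes "\<nu> \<subseteq> {0..n}" "card \<nu> = n"
  shows "\<exists>a. a \<le> n \<and> \<nu> = {0..n} - {a}"
proof -
  have "card ({0..n} - \<nu>) = card {0..n} - card \<nu>" using assms by (intro card_Diff_subset) (auto intro: finite_subset)
  then have "card ({0..n} - \<nu>) = 1" using assms by simp
  then obtain a where a: "{0..n} - \<nu> = {a}" by (rule card_1_singletonE)
  then have "a \<le> n" by auto
  moreover have "\<nu> = {0..n} - {a}" using a assms(1) by auto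
  ultimately show ?thesis by blast
qed

theorem lemma3p8:
  fixes n :: nat
    and X :: "'v set set" and col :: "'v \<Rightarrow> nat"
    and G :: "('g, 'b) monoid_scheme" and T :: "'g topology" and \<mu> :: "'g measure"
    and act :: "'g \<Rightarrow> 'v \<Rightarrow> 'v"
    and \<pi> :: "'g \<Rightarrow> ('e::banach \<Rightarrow>\<^sub>L 'e)"
    and D :: "nat \<Rightarrow> 'v set set"
    and \<nu> \<nu>' :: "nat set"
  assumes n2: "n \<ge> 2"
    and cplx: "pure_partite_complex n X col"
    and gal: "gallery_connected n X"
    and links: "links_finite_connected n X"
    and grp: "unimodular_haar G T \<mu>"
    and act: "type_preserving_action G X col act"
    and cocpt: "cocompact G X act"
    and stabs: "\<forall>\<tau>\<in>faces X (n - 2) \<union> faces X (n - 1) \<union> faces X n.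
                  openin T (stab G act \<tau>) \<and> compactin T (stab G act \<tau>)"
    and rep: "strongly_continuous_rep G T \<pi>"
    and reps: "\<forall>k\<in>{n - 2, n - 1, n}. orbit_reps G act (faces X k) (D k)"
    and nested: "\<forall>k1\<in>{n - 2, n - 1, n}. \<forall>k2\<in>{n - 2, n - 1, n}. k1 < k2 \<longrightarrow>
                   (\<forall>\<tau>\<in>D k1. \<exists>\<sigma>\<in>D k2. \<tau> \<subseteq> \<sigma>)"
    and nu: "\<nu> \<subseteq> {0..n}" "\<nu>' \<subseteq> {0..n}" "card \<nu> = n" "card \<nu>' = n" "\<nu> \<noteq> \<nu>'"
  shows "max (op_norm_on (C_space G act n X \<pi>) (C_norm G act \<mu> (D n))
                 (\<lambda>\<phi>. (\<lambda>\<sigma>. P_op n X col \<nu> (P_op n X col \<nu>' \<phi>) \<sigma> - P_op n X col (\<nu> \<inter> \<nu>') \<phi> \<sigma>)))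
             (op_norm_on (C_space G act n X \<pi>) (C_norm G act \<mu> (D n))
                 (\<lambda>\<phi>. (\<lambda>\<sigma>. P_op n X col \<nu>' (P_op n X col \<nu> \<phi>) \<sigma> - P_op n X col (\<nu> \<inter> \<nu>') \<phi> \<sigma>)))
         \<le> (SUP g\<in>K_set G act n (D n). (norm (\<pi> g))\<^sup>2)
            * Max (link_lambda TYPE('e) n X col ` {\<tau>\<in>D (n - 2). stype col \<tau> = \<nu> \<inter> \<nu>'})"
proof -
  obtain \<alpha> where a: "\<alpha> \<le> n" "\<nu> = {0..n} - {\<alpha>}" using diff_single[OF nu(1) nu(3)] by blast
  obtain \<beta> where b: "\<beta> \<le> n" "\<nu>' = {0..n} - {\<beta>}" using diff_single[OF nu(2) nu(4)] by blast
  have ab: "\<alpha> \<noteq> \<beta>" using a b nu(5) by blast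
  have inter: "\<nu> \<inter> \<nu>' = {0..n} - {\<alpha>, \<beta>}" using a b by auto
  have inter': "\<nu> \<inter> \<nu>' = {0..n} - {\<beta>, \<alpha>}" using a b by auto
  have cxa: "cx n X col" unfolding cx_def using n2 cplx links by blast
  have sa: "setting n X col G T \<mu> act \<pi> D"
    unfolding setting_def setting_axioms_def using cxa grp act cocpt stabs rep reps nested by blast
  interpret G1: glob n X col G T \<mu> act \<pi> D \<alpha> \<beta>
    unfolding glob_def glob_axioms_def using sa a b ab by blast
  interpret G2: glob n X col G T \<mu> act \<pi> D \<beta> \<alpha>
    unfolding glob_def glob_axioms_def using sa a b ab by blast
  have T1: "(\<lambda>\<phi>. (\<lambda>\<sigma>. P_op n X col \<nu> (P_op n X col \<nu>' \<phi>) \<sigma> - P_op n X col (\<nu> \<inter> \<nu>') \<phi> \<sigma>)) = G1.TT"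
    unfolding inter unfolding a(2) b(2) by (intro ext) (simp add: G1.TT_def)
  have T2: "(\<lambda>\<phi>. (\<lambda>\<sigma>. P_op n X col \<nu>' (P_op n X col \<nu> \<phi>) \<sigma> - P_op n X col (\<nu> \<inter> \<nu>') \<phi> \<sigma>)) = G2.TT"
    unfolding inter' unfolding a(2) b(2) by (intro ext) (simp add: G2.TT_def)
  have SK: "(SUP g\<in>K_set G act n (D n). (norm (\<pi> g))\<^sup>2) = G1.SK" unfolding G1.SK_def ..
  have SK2: "G2.SK = G1.SK" unfolding G1.SK_def G2.SK_def ..
  have LL: "Max (link_lambda TYPE('e) n X col ` {\<tau>\<in>D (n - 2). stype col \<tau> = \<nu> \<inter> \<nu>'}) = G1.LL"
    unfolding G1.LL_def G1.D2_def stype_def inter ..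
  have LL2: "G2.LL = G1.LL" unfolding G1.LL_def G2.LL_def G1.D2_def G2.D2_def by (simp add: insert_commute)
  show ?thesis unfolding T1 T2 SK LL using G1.op_bound G2.op_bound SK2 LL2 by simp
qed

end
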